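(* Let $\mathbf S_1,\dots,\mathbf S_n$ be nice subcategories of shrinkings. Then for every pointed digraph $(G,g)$ and $n\ge0$ the canonical map $$\mathrm{colim}_{(J_1,\dots,J_n)\in\mathbf S_1^{\mathrm{op}}\times\dots\times\mathbf S_n^{\mathrm{op}}}\Big[\bigotimes_{i=1}^n(J_i,\partial J_i),(G,g)\Big]\longrightarrow A_n(G,g)$$ is a bijection. Likewise, for a single nice subcategory $\mathbf S$, the canonical map $\mathrm{colim}_{J\in\mathbf S^{\mathrm{op}}}[(J,\partial J)^{\otimes n},(G,g)]\to A_n(G,g)$ is a bijection.
   Context: Digraphs: vertex sets with arrows $E\subseteq V^2$ containing the diagonal; digraph maps preserve arrows. Box product $G\otimes H$: arrow $(g,h)\to(g',h')$ iff ($g\to g'$, $h=h'$) or ($g=g'$, $h\to h'$). An interval is a digraph on $\{0,\dots,k\}$ whose non-degenerate arrows are exactly one of $i\to i+1$, $i+1\to i$ for each $i<k$; $\partial J=\{0,k\}$. A shrinking is a digraph map of intervals surjective and monotone on vertices; $\mathsf{Shr}$ is the category of all intervals and shrinkings. A nice subcategory of shrinkings is a (not necessarily full) subcategory $\mathbf S\subseteq\mathsf{Shr}$ such that (1) for every interval $J$ there is $J'\in\mathbf S$ and a shrinking $J'\to J$; (2) for $J,J'\in\mathbf S$, if there exists a shrinking $J'\to J$ then there exists a morphism $J'\to J$ in $\mathbf S$. Pairs $(G,H)$ ($H$ an induced subdigraph), maps of pairs, $(G,H)\otimes(G',H')=(G\otimes G',G\otimes H'\cup H\otimes G')$; two pair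 maps are homotopic rel $H$ if joined by a chain of pair maps agreeing on $H$ where consecutive maps satisfy $\varphi_t(x)\to\varphi_{t+1}(x)$ for all $x$ or the reverse for all $x$; $[-,-]$ denotes classes; $(G,g)=(G,\{g\})$. $A_n(G,g)=\mathrm{colim}_{(J_1,\dots,J_n)\in(\mathsf{Shr}^{\mathrm{op}})^n}[\bigotimes_i(J_i,\partial J_i),(G,g)]$, with functoriality by precomposition. *)

theory Defs
  imports "HOL-Library.FuncSet"
begin

type_synonym 'a digraph = "'a set \<times> ('a \<times> 'a) set"

definition is_digraph :: "'a digraph \<Rightarrow> bool" where
  "is_digraph G \<longleftrightarrow> snd G \<subseteq> fst G \<times> fst G \<and> (\<forall>x\<in>fst G. (x, x) \<in> snd G)"

definition dmap :: "'a digraph \<Rightarrow> 'b digraph \<Rightarrow> ('a \<Rightarrow> 'b) \<Rightarrow> bool" where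
  "dmap G H f \<longleftrightarrow> (\<forall>x\<in>fst G. f x \<in> fst H) \<and> (\<forall>(x, y)\<in>snd G. (f x, f y) \<in> snd H)"

text \<open>An interval on vertices 0..k is encoded by a list J of length k:
  J!i = True means the arrow i -> i+1, J!i = False means i+1 -> i.\<close>
type_synonym interval = "bool list"

definition ivl :: "interval \<Rightarrow> nat digraph" where
  "ivl J = ({0..length J},
     {(i, i) | i. i \<le> length J} \<union> {(i, Suc i) | i. i < length J \<and> J ! i}
     \<union> {(Suc i, i) | i. i < length J \<and> \<not> J ! i})"

definition ivl_bd :: "interval \<Rightarrow> nat set" where
  "ivl_bd J = {0, length J}"

definition shrinking :: "interval \<Rightarrow> interval \<Rightarrow> (nat \<Rightarrow> nat) \<Rightarrow> bool" where
  "shrinking J' J f \<longleftrightarrow> f \<in> extensional {0..length J'} \<and> dmap (ivl J') (ivl J) f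
     \<and> f ` {0..length J'} = {0..length J} \<and> mono_on {0..length J'} f"

text \<open>A morphism is a triple (source, target, function).\<close>
type_synonym shr = "interval \<times> interval \<times> (nat \<Rightarrow> nat)"

type_synonym cat = "interval set \<times> shr set"

definition shr_id :: "interval \<Rightarrow> shr" where
  "shr_id J = (J, J, restrict id {0..length J})"

text \<open>Composition: first m, then m'.\<close>
definition shr_comp :: "shr \<Rightarrow> shr \<Rightarrow> shr" where
  "shr_comp m m' = (fst m, fst (snd m'), restrict (snd (snd m') \<circ> snd (snd m)) {0..length (fst m)})"

definition Shr :: cat where
  "Shr = (UNIV, {(J', J, f). shrinking J' J f})"

definition subcat_of_Shr :: "cat \<Rightarrow> bool" where
  "subcat_of_Shr S \<longleftrightarrow> snd S \<subseteq> snd Shr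
     \<and> (\<forall>m\<in>snd S. fst m \<in> fst S \<and> fst (snd m) \<in> fst S)
     \<and> (\<forall>J\<in>fst S. shr_id J \<in> snd S)
     \<and> (\<forall>m\<in>snd S. \<forall>m'\<in>snd S. fst m' = fst (snd m) \<longrightarrow> shr_comp m m' \<in> snd S)"

definition nice_subcat :: "cat \<Rightarrow> bool" where
  "nice_subcat S \<longleftrightarrow> subcat_of_Shr S
     \<and> (\<forall>J. \<exists>J'\<in>fst S. \<exists>f. shrinking J' J f)
     \<and> (\<forall>J\<in>fst S. \<forall>J'\<in>fst S. (\<exists>f. shrinking J' J f) \<longrightarrow> (\<exists>f. (J', J, f) \<in> snd S))"

definition tverts :: "interval list \<Rightarrow> nat list set" where
  "tverts Js = {xs. length xs = length Js \<and> (\<forall>i<length Js. xs ! i \<le> length (Js ! i))}"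

definition tarrows :: "interval list \<Rightarrow> (nat list \<times> nat list) set" where
  "tarrows Js = {(xs, ys). xs \<in> tverts Js \<and> ys \<in> tverts Js \<and>
     (xs = ys \<or> (\<exists>i<length Js. (\<forall>j<length Js. j \<noteq> i \<longrightarrow> xs ! j = ys ! j)
                   \<and> (xs ! i, ys ! i) \<in> snd (ivl (Js ! i))))}"

definition tgraph :: "interval list \<Rightarrow> nat list digraph" where
  "tgraph Js = (tverts Js, tarrows Js)"

definition tbd :: "interval list \<Rightarrow> nat list set" where
  "tbd Js = {xs \<in> tverts Js. \<exists>i<length Js. xs ! i \<in> ivl_bd (Js ! i)}"

definition pmap :: "interval list \<Rightarrow> 'a digraph \<Rightarrow> 'a \<Rightarrow> (nat list \<Rightarrow> 'a) \<Rightarrow> bool" where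
  "pmap Js G g \<phi> \<longleftrightarrow> \<phi> \<in> extensional (tverts Js) \<and> dmap (tgraph Js) G \<phi> \<and> (\<forall>x\<in>tbd Js. \<phi> x = g)"

definition htpy1 :: "interval list \<Rightarrow> 'a digraph \<Rightarrow> 'a \<Rightarrow> ((nat list \<Rightarrow> 'a) \<times> (nat list \<Rightarrow> 'a)) set" where
  "htpy1 Js G g = {(\<phi>, \<psi>). pmap Js G g \<phi> \<and> pmap Js G g \<psi> \<and> (\<forall>x\<in>tbd Js. \<phi> x = \<psi> x)
     \<and> ((\<forall>x\<in>tverts Js. (\<phi> x, \<psi> x) \<in> snd G) \<or> (\<forall>x\<in>tverts Js. (\<psi> x, \<phi> x) \<in> snd G))}"

definition htpy :: "interval list \<Rightarrow> 'a digraph \<Rightarrow> 'a \<Rightarrow> ((nat list \<Rightarrow> 'a) \<times> (nat list \<Rightarrow> 'a)) set" where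
  "htpy Js G g = (htpy1 Js G g)\<^sup>*"

definition hset :: "interval list \<Rightarrow> 'a digraph \<Rightarrow> 'a \<Rightarrow> (nat list \<Rightarrow> 'a) set set" where
  "hset Js G g = {\<phi>. pmap Js G g \<phi>} // htpy Js G g"

definition tmap :: "(nat \<Rightarrow> nat) list \<Rightarrow> nat list \<Rightarrow> nat list" where
  "tmap fs xs = map (\<lambda>i. (fs ! i) (xs ! i)) [0..<length xs]"

definition precomp :: "'a digraph \<Rightarrow> 'a \<Rightarrow> interval list \<Rightarrow> (nat \<Rightarrow> nat) list
    \<Rightarrow> (nat list \<Rightarrow> 'a) set \<Rightarrow> (nat list \<Rightarrow> 'a) set" where
  "precomp G g Js' fs c = {\<psi>. \<exists>\<phi>\<in>c. (restrict (\<phi> \<circ> tmap fs) (tverts Js'), \<psi>) \<in> htpy Js' G g}"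

text \<open>Colimit over S_1^op x ... x S_n^op (Ss = [S_1,...,S_n]) of the set-valued functor,
  as the disjoint union modulo the equivalence relation generated by the functor's action.\<close>
definition pobjs :: "cat list \<Rightarrow> interval list set" where
  "pobjs Ss = {Js. length Js = length Ss \<and> (\<forall>i<length Ss. Js ! i \<in> fst (Ss ! i))}"

definition pcarrier :: "cat list \<Rightarrow> 'a digraph \<Rightarrow> 'a \<Rightarrow> (interval list \<times> (nat list \<Rightarrow> 'a) set) set" where
  "pcarrier Ss G g = {(Js, c). Js \<in> pobjs Ss \<and> c \<in> hset Js G g}"

definition pgen :: "cat list \<Rightarrow> 'a digraph \<Rightarrow> 'a
    \<Rightarrow> ((interval list \<times> (nat list \<Rightarrow> 'a) set) \<times> (interval list \<times> (nat list \<Rightarrow> 'a) set)) set" where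
  "pgen Ss G g = {((Js, c), (Js', precomp G g Js' (map (\<lambda>m. snd (snd m)) ms) c)) | Js Js' c ms.
     Js \<in> pobjs Ss \<and> Js' \<in> pobjs Ss \<and> c \<in> hset Js G g \<and> length ms = length Ss \<and>
     (\<forall>i<length Ss. ms ! i \<in> snd (Ss ! i) \<and> fst (ms ! i) = Js' ! i \<and> fst (snd (ms ! i)) = Js ! i)}"

definition prel :: "cat list \<Rightarrow> 'a digraph \<Rightarrow> 'a
    \<Rightarrow> ((interval list \<times> (nat list \<Rightarrow> 'a) set) \<times> (interval list \<times> (nat list \<Rightarrow> 'a) set)) set" where
  "prel Ss G g = (pgen Ss G g \<union> (pgen Ss G g)\<inverse>)\<^sup>*"

definition pcolim :: "cat list \<Rightarrow> 'a digraph \<Rightarrow> 'a \<Rightarrow> (interval list \<times> (nat list \<Rightarrow> 'a) set) set set" where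
  "pcolim Ss G g = pcarrier Ss G g // prel Ss G g"

definition A :: "nat \<Rightarrow> 'a digraph \<Rightarrow> 'a \<Rightarrow> (interval list \<times> (nat list \<Rightarrow> 'a) set) set set" where
  "A n G g = pcolim (replicate n Shr) G g"

text \<open>Canonical map induced by the inclusion S_1 x ... x S_n into Shr^n.\<close>
definition pcan :: "cat list \<Rightarrow> 'a digraph \<Rightarrow> 'a
    \<Rightarrow> (interval list \<times> (nat list \<Rightarrow> 'a) set) set \<Rightarrow> (interval list \<times> (nat list \<Rightarrow> 'a) set) set" where
  "pcan Ss G g X = prel (replicate (length Ss) Shr) G g `` X"

text \<open>Colimit over S^op of J |-> [ (J, dJ)^(tensor n), (G, g) ].\<close>
definition dcarrier :: "cat \<Rightarrow> nat \<Rightarrow> 'a digraph \<Rightarrow> 'a \<Rightarrow> (interval \<times> (nat list \<Rightarrow> 'a) set) set" where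
  "dcarrier S n G g = {(J, c). J \<in> fst S \<and> c \<in> hset (replicate n J) G g}"

definition dgen :: "cat \<Rightarrow> nat \<Rightarrow> 'a digraph \<Rightarrow> 'a
    \<Rightarrow> ((interval \<times> (nat list \<Rightarrow> 'a) set) \<times> (interval \<times> (nat list \<Rightarrow> 'a) set)) set" where
  "dgen S n G g = {((J, c), (J', precomp G g (replicate n J') (replicate n f) c)) | J J' f c.
     J \<in> fst S \<and> J' \<in> fst S \<and> (J', J, f) \<in> snd S \<and> c \<in> hset (replicate n J) G g}"

definition dcolim :: "cat \<Rightarrow> nat \<Rightarrow> 'a digraph \<Rightarrow> 'a \<Rightarrow> (interval \<times> (nat list \<Rightarrow> 'a) set) set set" where
  "dcolim S n G g = dcarrier S n G g // (dgen S n G g \<union> (dgen S n G g)\<inverse>)\<^sup>*"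

text \<open>Canonical map induced by the diagonal S^op -> (Shr^op)^n.\<close>
definition dcan :: "nat \<Rightarrow> 'a digraph \<Rightarrow> 'a
    \<Rightarrow> (interval \<times> (nat list \<Rightarrow> 'a) set) set \<Rightarrow> (interval list \<times> (nat list \<Rightarrow> 'a) set) set" where
  "dcan n G g X = prel (replicate n Shr) G g `` ((\<lambda>(J, c). (replicate n J, c)) ` X)"

end

theory Submission
  imports Defs
begin

definition AJ :: "interval \<Rightarrow> (nat \<times> nat) set" where "AJ J = snd (ivl J)"

lemma AJ_iff: "(a, b) \<in> snd (ivl J) \<longleftrightarrow>
   (a = b \<and> a \<le> length J) \<or> (b = Suc a \<and> a < length J \<and> J ! a) \<or> (a = Suc b \<and> b < length J \<and> \<not> J ! b)"
  unfolding ivl_def by auto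

lemma fst_ivl[simp]: "fst (ivl J) = {0..length J}" unfolding ivl_def by simp

lemma dmap_ivl_iff:
  "dmap (ivl J') (ivl J) f \<longleftrightarrow> (\<forall>x\<le>length J'. f x \<le> length J) \<and>
     (\<forall>y<length J'. if J' ! y then (f y, f (Suc y)) \<in> snd (ivl J) else (f (Suc y), f y) \<in> snd (ivl J))"
proof
  assume d: "dmap (ivl J') (ivl J) f"
  have 1: "\<forall>x\<le>length J'. f x \<le> length J" using d unfolding dmap_def by auto
  have a: "(f x, f y) \<in> snd (ivl J)" if "(x, y) \<in> snd (ivl J')" for x y
    using d that unfolding dmap_def by auto
  show "(\<forall>x\<le>length J'. f x \<le> length J) \<and>
     (\<forall>y<length J'. if J' ! y then (f y, f (Suc y)) \<in> snd (ivl J) else (f (Suc y), f y) \<in> snd (ivl J))"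
    using 1 a by (auto simp: AJ_iff)
next
  assume h: "(\<forall>x\<le>length J'. f x \<le> length J) \<and>
     (\<forall>y<length J'. if J' ! y then (f y, f (Suc y)) \<in> snd (ivl J) else (f (Suc y), f y) \<in> snd (ivl J))"
  show "dmap (ivl J') (ivl J) f"
    unfolding dmap_def
  proof (intro conjI ballI)
    fix x assume "x \<in> fst (ivl J')" then show "f x \<in> fst (ivl J)" using h by auto
  next
    fix p assume p: "p \<in> snd (ivl J')"
    obtain x y where xy: "p = (x, y)" by (cases p)
    have "(f x, f y) \<in> snd (ivl J)"
    proof -
      from p xy consider "x = y" "x \<le> length J'" | "y = Suc x" "x < length J'" "J' ! x"
        | "x = Suc y" "y < length J'" "\<not> J' ! y" by (auto simp: AJ_iff)
      then show ?thesis
      proof cases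
        case 1 then show ?thesis using h by (auto simp: AJ_iff)
      next
        case 2 then show ?thesis using h by (metis (full_types))
      next
        case 3 then show ?thesis using h by (metis (full_types))
      qed
    qed
    then show "case p of (x, y) \<Rightarrow> (f x, f y) \<in> snd (ivl J)" using xy by simp
  qed
qed

definition good :: "interval \<Rightarrow> interval \<Rightarrow> (nat \<Rightarrow> nat) \<Rightarrow> bool" where
  "good J' J f \<longleftrightarrow> dmap (ivl J') (ivl J) f \<and> mono_on {0..length J'} f \<and> f 0 = 0 \<and> f (length J') = length J"

lemma good_le: "good J' J f \<Longrightarrow> x \<le> length J' \<Longrightarrow> f x \<le> length J"
  unfolding good_def dmap_ivl_iff by auto

lemma good_mono: "good J' J f \<Longrightarrow> x \<le> y \<Longrightarrow> y \<le> length J' \<Longrightarrow> f x \<le> f y"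
  unfolding good_def mono_on_def by auto

lemma good_arr: "good J' J f \<Longrightarrow> y < length J' \<Longrightarrow>
   (if J' ! y then (f y, f (Suc y)) \<in> snd (ivl J) else (f (Suc y), f y) \<in> snd (ivl J))"
  unfolding good_def dmap_ivl_iff by auto

lemma good_step: "good J' J f \<Longrightarrow> y < length J' \<Longrightarrow> f (Suc y) = f y \<or> f (Suc y) = Suc (f y)"
proof -
  assume g: "good J' J f" and y: "y < length J'"
  have "f y \<le> f (Suc y)" using good_mono[OF g, of y "Suc y"] y by auto
  then show ?thesis using good_arr[OF g y] by (auto simp: AJ_iff split: if_splits)
qed

lemma shrinking_good: "shrinking J' J f \<Longrightarrow> good J' J f"
proof -
  assume s: "shrinking J' J f"
  have im: "f ` {0..length J'} = {0..length J}" and m: "mono_on {0..length J'} f"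
    and d: "dmap (ivl J') (ivl J) f" using s unfolding shrinking_def by auto
  obtain a where a: "a \<le> length J'" "f a = 0" using im by (metis atLeastAtMost_iff imageE zero_le)
  have "f 0 \<le> f a" using m a unfolding mono_on_def by (meson atLeastAtMost_iff le0)
  then have 0: "f 0 = 0" using a by simp
  obtain b where b: "b \<le> length J'" "f b = length J" using im
    by (metis atLeastAtMost_iff imageE order_refl zero_le)
  have "f b \<le> f (length J')" using m b unfolding mono_on_def by (meson atLeastAtMost_iff le0 order_refl)
  moreover have "f (length J') \<le> length J" using im by auto
  ultimately have "f (length J') = length J" using b by simp
  then show ?thesis using 0 m d unfolding good_def by simp
qed

lemma good_min: assumes f: "good J' J f" and h: "good J' J h"
  shows "good J' J (\<lambda>y. min (f y) (h y))"
proof -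
  let ?m = "\<lambda>y. min (f y) (h y)"
  have c: "(?m y, ?m (Suc y)) = (f y, f (Suc y)) \<or> (?m y, ?m (Suc y)) = (h y, h (Suc y)) \<or> ?m y = ?m (Suc y)"
    if y: "y < length J'" for y
  proof -
    have "f y \<le> f (Suc y)" "h y \<le> h (Suc y)" using good_mono[OF f, of y "Suc y"] good_mono[OF h, of y "Suc y"] y by auto
    moreover have "f (Suc y) = f y \<or> f (Suc y) = Suc (f y)" "h (Suc y) = h y \<or> h (Suc y) = Suc (h y)"
      using good_step[OF f y] good_step[OF h y] by auto
    ultimately show ?thesis by (auto simp: min_def)
  qed
  have le: "\<forall>x\<le>length J'. ?m x \<le> length J" using good_le[OF f] by (simp add: min.coboundedI1)
  have "\<forall>y<length J'. if J' ! y then (?m y, ?m (Suc y)) \<in> snd (ivl J) else (?m (Suc y), ?m y) \<in> snd (ivl J)"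
  proof (intro allI impI)
    fix y assume y: "y < length J'"
    have r: "(?m y, ?m y) \<in> snd (ivl J)" using le y by (simp add: AJ_iff)
    show "if J' ! y then (?m y, ?m (Suc y)) \<in> snd (ivl J) else (?m (Suc y), ?m y) \<in> snd (ivl J)"
      using c[OF y] good_arr[OF f y] good_arr[OF h y] r by (auto split: if_splits)
  qed
  then have d: "dmap (ivl J') (ivl J) ?m" using le by (simp add: dmap_ivl_iff)
  have "mono_on {0..length J'} ?m" unfolding mono_on_def
    using good_mono[OF f] good_mono[OF h] by (auto simp: min_le_iff_disj)
  moreover have "?m 0 = 0" "?m (length J') = length J" using f h unfolding good_def by auto
  ultimately show ?thesis using d unfolding good_def by simp
qed

definition H1 :: "interval \<Rightarrow> interval \<Rightarrow> ((nat \<Rightarrow> nat) \<times> (nat \<Rightarrow> nat)) set" where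
  "H1 J' J = {(f, f'). good J' J f \<and> good J' J f' \<and>
     ((\<forall>y\<le>length J'. (f y, f' y) \<in> snd (ivl J)) \<or> (\<forall>y\<le>length J'. (f' y, f y) \<in> snd (ivl J)))}"

lemma H1_sym: "(f, f') \<in> H1 J' J \<Longrightarrow> (f', f) \<in> H1 J' J"
  unfolding H1_def by auto

lemma H1_rtrancl_sym: "(f, f') \<in> (H1 J' J)\<^sup>* \<Longrightarrow> (f', f) \<in> (H1 J' J)\<^sup>*"
proof (induction rule: rtrancl_induct)
  case base then show ?case by simp
next
  case (step y z) then show ?case using H1_sym by (meson converse_rtrancl_into_rtrancl)
qed

lemma descent_step:
  assumes f: "good J' J f" and h: "good J' J h" and le: "\<forall>y\<le>length J'. h y \<le> f y"
    and ne: "\<exists>y\<le>length J'. f y \<noteq> h y"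
  shows "\<exists>f'. (f, f') \<in> H1 J' J \<and> good J' J f' \<and> (\<forall>y\<le>length J'. h y \<le> f' y)
     \<and> (\<Sum>y\<le>length J'. f' y - h y) < (\<Sum>y\<le>length J'. f y - h y)"
proof -
  define L where "L = length J'"
  define D where "D = {y. y \<le> L \<and> f y \<noteq> h y}"
  have Dfin: "finite D" unfolding D_def by auto
  have Dne: "D \<noteq> {}" using ne unfolding D_def L_def by auto
  define x where "x = Max D"
  have xD: "x \<in> D" unfolding x_def using Dfin Dne by simp
  have xmax: "\<And>y. y \<le> L \<Longrightarrow> x < y \<Longrightarrow> f y = h y"
    using Dfin unfolding x_def D_def by (metis (mono_tags, lifting) Max_ge mem_Collect_eq not_le)
  have xL: "x \<le> L" using xD unfolding D_def by auto
  have fL: "f L = h L" using f h unfolding good_def L_def by simp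
  have xL': "x < L" using xL xD fL unfolding D_def by (auto simp: le_less)
  define v where "v = f x"
  have hx: "h x < v" using le xD unfolding D_def v_def L_def by (metis (mono_tags, lifting) le_less mem_Collect_eq)
  have fs: "f (Suc x) = h (Suc x)" using xmax xL' by simp
  have "v \<le> f (Suc x)" unfolding v_def using good_mono[OF f, of x "Suc x"] xL' L_def by simp
  moreover have "h (Suc x) = h x \<or> h (Suc x) = Suc (h x)" using good_step[OF h, of x] xL' L_def by simp
  ultimately have fsv: "f (Suc x) = v" and hxv: "h x = v - 1" and hsv: "h (Suc x) = v" and v1: "v \<ge> 1"
    using hx fs by auto
  define f' where "f' = (\<lambda>y. if y \<le> x \<and> f y = v then v - 1 else f y)"
  have f'le: "\<And>y. f' y \<le> f y" unfolding f'_def by auto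
  have hf': "\<forall>y\<le>length J'. h y \<le> f' y"
  proof (intro allI impI)
    fix y assume "y \<le> length J'"
    show "h y \<le> f' y"
    proof (cases "y \<le> x \<and> f y = v")
      case True
      then have "h y \<le> h x" using good_mono[OF h, of y x] xL L_def by simp
      then show ?thesis using True hxv unfolding f'_def by simp
    next
      case False then show ?thesis using le \<open>y \<le> length J'\<close> unfolding f'_def by (simp only: if_False)
    qed
  qed
  have f'0: "f' 0 = 0" using f v1 unfolding f'_def good_def by auto
  have f'L: "f' L = length J" using f xL' unfolding f'_def good_def L_def by auto
  have vL: "v \<le> length J" using good_le[OF f] xL L_def v_def by simp
  have mono': "mono_on {0..L} f'"
    unfolding mono_on_def
  proof (intro allI impI)
    fix a b assume ab: "a \<in> {0..L} \<and> b \<in> {0..L} \<and> a \<le> b"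
    have fab: "f a \<le> f b" using good_mono[OF f, of a b] ab L_def by auto
    show "f' a \<le> f' b"
    proof (cases "b \<le> x \<and> f b = v")
      case True
      have "f a \<le> v" using fab True by simp
      then show ?thesis using True ab unfolding f'_def by auto
    next
      case False then show ?thesis using fab unfolding f'_def by auto
    qed
  qed
  have arr': "if J' ! y then (f' y, f' (Suc y)) \<in> snd (ivl J) else (f' (Suc y), f' y) \<in> snd (ivl J)"
    if y: "y < L" for y
  proof -
    have st: "f (Suc y) = f y \<or> f (Suc y) = Suc (f y)" using good_step[OF f, of y] y L_def by simp
    have refl: "(v - 1, v - 1) \<in> snd (ivl J)" using vL by (simp add: AJ_iff)
    consider (both) "y \<le> x \<and> f y = v" "Suc y \<le> x \<and> f (Suc y) = v"
      | (none) "\<not> (y \<le> x \<and> f y = v)" "\<not> (Suc y \<le> x \<and> f (Suc y) = v)"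
      | (first) "y \<le> x \<and> f y = v" "\<not> (Suc y \<le> x \<and> f (Suc y) = v)"
      | (second) "\<not> (y \<le> x \<and> f y = v)" "Suc y \<le> x \<and> f (Suc y) = v" by blast
    then show ?thesis
    proof cases
      case both then show ?thesis using refl unfolding f'_def by simp
    next
      case none
      have "f' y = f y" "f' (Suc y) = f (Suc y)" using none unfolding f'_def by (simp only: if_False)+
      then show ?thesis using good_arr[OF f, of y] y L_def by simp
    next
      case first
      have "y = x"
      proof (rule ccontr)
        assume "y \<noteq> x"
        then have "Suc y \<le> x" using first by simp
        then have "f (Suc y) \<le> v" using good_mono[OF f, of "Suc y" x] xL L_def v_def by simp
        then show False using first st \<open>Suc y \<le> x\<close> by auto
      qed
      then have "f' y = h y" "f' (Suc y) = h (Suc y)" using hxv fsv hsv first unfolding f'_def by auto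
      then show ?thesis using good_arr[OF h, of y] y L_def by simp
    next
      case second
      have "f y \<le> v" using second good_mono[OF f, of y "Suc y"] y L_def by simp
      then have "f y = v - 1" using second st by auto
      then show ?thesis using refl second unfolding f'_def by simp
    qed
  qed
  have le': "\<forall>x\<le>length J'. f' x \<le> length J" using good_le[OF f] f'le le_trans by blast
  have gf': "good J' J f'" unfolding good_def dmap_ivl_iff using arr' le' mono' f'0 f'L L_def by simp
  have H: "(f, f') \<in> H1 J' J"
  proof -
    have vv: "v - 1 < length J" using vL v1 by simp
    have rf: "\<And>y. y \<le> length J' \<Longrightarrow> (f y, f y) \<in> snd (ivl J)" using good_le[OF f] by (simp add: AJ_iff)
    show ?thesis
    proof (cases "J ! (v - 1)")
      case True
      have "\<forall>y\<le>length J'. (f' y, f y) \<in> snd (ivl J)"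
        using rf True vv v1 unfolding f'_def by (auto simp: AJ_iff)
      then show ?thesis using f gf' unfolding H1_def by auto
    next
      case False
      have "\<forall>y\<le>length J'. (f y, f' y) \<in> snd (ivl J)"
        using rf False vv v1 unfolding f'_def by (auto simp: AJ_iff)
      then show ?thesis using f gf' unfolding H1_def by auto
    qed
  qed
  have "(\<Sum>y\<le>length J'. f' y - h y) < (\<Sum>y\<le>length J'. f y - h y)"
  proof (rule sum_strict_mono_ex1)
    show "finite {..length J'}" by simp
    show "\<forall>y\<in>{..length J'}. f' y - h y \<le> f y - h y" using f'le by (simp add: diff_le_mono)
    show "\<exists>y\<in>{..length J'}. f' y - h y < f y - h y"
      using xL L_def hx hxv v1 unfolding f'_def v_def by (intro bexI[of _ x]) auto
  qed
  then show ?thesis using H gf' hf' by blast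
qed

lemma descent:
  assumes h: "good J' J h"
  shows "good J' J f \<Longrightarrow> (\<forall>y\<le>length J'. h y \<le> f y) \<Longrightarrow> (f, h) \<in> (H1 J' J)\<^sup>*"
proof (induction "\<Sum>y\<le>length J'. f y - h y" arbitrary: f rule: less_induct)
  case (less f)
  show ?case
  proof (cases "\<exists>y\<le>length J'. f y \<noteq> h y")
    case True
    obtain f' where f': "(f, f') \<in> H1 J' J" "good J' J f'" "\<forall>y\<le>length J'. h y \<le> f' y"
      "(\<Sum>y\<le>length J'. f' y - h y) < (\<Sum>y\<le>length J'. f y - h y)"
      using descent_step[OF less.prems(1) h less.prems(2) True] by blast
    have "(f', h) \<in> (H1 J' J)\<^sup>*" using less.hyps[OF f'(4) f'(2) f'(3)] .
    then show ?thesis using f'(1) by (meson converse_rtrancl_into_rtrancl)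
  next
    case False
    have "\<forall>y\<le>length J'. (f y, h y) \<in> snd (ivl J)" using False good_le[OF h] by (simp add: AJ_iff)
    then have "(f, h) \<in> H1 J' J" using less.prems h unfolding H1_def by auto
    then show ?thesis by simp
  qed
qed

lemma good_connected:
  assumes f: "good J' J f" and g: "good J' J g"
  shows "(f, g) \<in> (H1 J' J)\<^sup>*"
proof -
  let ?m = "\<lambda>y. min (f y) (g y)"
  have gm: "good J' J ?m" using good_min[OF f g] .
  have 1: "(f, ?m) \<in> (H1 J' J)\<^sup>*" using descent[OF gm f] by simp
  have 2: "(g, ?m) \<in> (H1 J' J)\<^sup>*" using descent[OF gm g] by simp
  show ?thesis using 1 H1_rtrancl_sym[OF 2] by simp
qed

definition goodl :: "interval list \<Rightarrow> interval list \<Rightarrow> (nat \<Rightarrow> nat) list \<Rightarrow> bool" where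
  "goodl K Js fs \<longleftrightarrow> length K = length Js \<and> length fs = length Js \<and> (\<forall>i<length Js. good (K ! i) (Js ! i) (fs ! i))"

definition pcomp :: "(nat list \<Rightarrow> 'a) \<Rightarrow> (nat \<Rightarrow> nat) list \<Rightarrow> interval list \<Rightarrow> nat list \<Rightarrow> 'a" where
  "pcomp \<phi> fs K = restrict (\<phi> \<circ> tmap fs) (tverts K)"

lemma tmap_length[simp]: "length (tmap fs xs) = length xs" unfolding tmap_def by simp
lemma tmap_nth[simp]: "i < length xs \<Longrightarrow> tmap fs xs ! i = (fs ! i) (xs ! i)" unfolding tmap_def by simp

lemma tmap_tverts: "goodl K Js fs \<Longrightarrow> xs \<in> tverts K \<Longrightarrow> tmap fs xs \<in> tverts Js"
  unfolding goodl_def tverts_def using good_le by auto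

lemma refl_ivl: "a \<le> length J \<Longrightarrow> (a, a) \<in> snd (ivl J)" by (simp add: AJ_iff)

lemma tarrows_refl: "xs \<in> tverts Js \<Longrightarrow> (xs, xs) \<in> tarrows Js" unfolding tarrows_def by auto

lemma good_arrow: "good J' J f \<Longrightarrow> (a, b) \<in> snd (ivl J') \<Longrightarrow> (f a, f b) \<in> snd (ivl J)"
  unfolding good_def dmap_def by auto

lemma tmap_tarrows:
  assumes gl: "goodl K Js fs" and a: "(xs, ys) \<in> tarrows K"
  shows "(tmap fs xs, tmap fs ys) \<in> tarrows Js"
proof -
  have xs: "xs \<in> tverts K" and ys: "ys \<in> tverts K" using a unfolding tarrows_def by auto
  have txs: "tmap fs xs \<in> tverts Js" and tys: "tmap fs ys \<in> tverts Js" using tmap_tverts[OF gl] xs ys by auto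
  show ?thesis
  proof (cases "xs = ys")
    case True then show ?thesis using tarrows_refl[OF txs] by simp
  next
    case False
    then obtain i where i: "i < length K" "\<forall>j<length K. j \<noteq> i \<longrightarrow> xs ! j = ys ! j"
      "(xs ! i, ys ! i) \<in> snd (ivl (K ! i))" using a unfolding tarrows_def by auto
    have lx: "length xs = length K" "length ys = length K" "length K = length Js"
      using xs ys gl unfolding tverts_def goodl_def by auto
    have "(tmap fs xs ! i, tmap fs ys ! i) \<in> snd (ivl (Js ! i))"
      using good_arrow[OF _ i(3), of "Js ! i" "fs ! i"] gl i(1) lx unfolding goodl_def by simp
    moreover have "\<forall>j<length Js. j \<noteq> i \<longrightarrow> tmap fs xs ! j = tmap fs ys ! j" using i(2) lx by simp
    ultimately show ?thesis using txs tys i(1) lx unfolding tarrows_def by auto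
  qed
qed

lemma good_bd: "good J' J f \<Longrightarrow> a \<in> ivl_bd J' \<Longrightarrow> f a \<in> ivl_bd J"
  unfolding good_def ivl_bd_def by auto

lemma tmap_tbd: "goodl K Js fs \<Longrightarrow> xs \<in> tbd K \<Longrightarrow> tmap fs xs \<in> tbd Js"
proof -
  assume gl: "goodl K Js fs" and x: "xs \<in> tbd K"
  then obtain i where i: "i < length K" "xs ! i \<in> ivl_bd (K ! i)" and xv: "xs \<in> tverts K" unfolding tbd_def by auto
  have l: "length xs = length K" "length K = length Js" using xv gl unfolding tverts_def goodl_def by auto
  have "tmap fs xs ! i \<in> ivl_bd (Js ! i)" using good_bd[OF _ i(2), of "Js ! i" "fs ! i"] gl i l unfolding goodl_def by simp
  then show ?thesis using tmap_tverts[OF gl xv] i l unfolding tbd_def by auto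
qed

lemma pcomp_apply: "xs \<in> tverts K \<Longrightarrow> pcomp \<phi> fs K xs = \<phi> (tmap fs xs)" unfolding pcomp_def by simp

lemma tbd_tverts: "xs \<in> tbd K \<Longrightarrow> xs \<in> tverts K" unfolding tbd_def by simp

lemma pmap_pcomp:
  assumes gl: "goodl K Js fs" and p: "pmap Js G g \<phi>"
  shows "pmap K G g (pcomp \<phi> fs K)"
proof -
  have d: "dmap (tgraph Js) G \<phi>" and b: "\<forall>x\<in>tbd Js. \<phi> x = g" using p unfolding pmap_def by auto
  have "dmap (tgraph K) G (pcomp \<phi> fs K)"
    unfolding dmap_def
  proof (intro conjI ballI)
    fix x assume "x \<in> fst (tgraph K)"
    then have x: "x \<in> tverts K" unfolding tgraph_def by simp
    show "pcomp \<phi> fs K x \<in> fst G" unfolding pcomp_apply[OF x] using tmap_tverts[OF gl x] d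
      unfolding dmap_def tgraph_def by auto
  next
    fix p assume "p \<in> snd (tgraph K)"
    then obtain xs ys where p: "p = (xs, ys)" "(xs, ys) \<in> tarrows K" unfolding tgraph_def by (cases p) auto
    have xy: "xs \<in> tverts K" "ys \<in> tverts K" using p unfolding tarrows_def by auto
    have "(\<phi> (tmap fs xs), \<phi> (tmap fs ys)) \<in> snd G"
      using tmap_tarrows[OF gl p(2)] d unfolding dmap_def tgraph_def by auto
    then show "case p of (x, y) \<Rightarrow> (pcomp \<phi> fs K x, pcomp \<phi> fs K y) \<in> snd G"
      using p pcomp_apply[OF xy(1), of \<phi> fs] pcomp_apply[OF xy(2), of \<phi> fs] by simp
  qed
  moreover have "\<forall>x\<in>tbd K. pcomp \<phi> fs K x = g"
    using b tmap_tbd[OF gl] pcomp_apply tbd_tverts by metis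
  moreover have "pcomp \<phi> fs K \<in> extensional (tverts K)" unfolding pcomp_def by simp
  ultimately show ?thesis unfolding pmap_def by simp
qed

lemma htpy1_sym: "(\<phi>, \<psi>) \<in> htpy1 Js G g \<Longrightarrow> (\<psi>, \<phi>) \<in> htpy1 Js G g"
  unfolding htpy1_def by auto

lemma htpy_sym: "(\<phi>, \<psi>) \<in> htpy Js G g \<Longrightarrow> (\<psi>, \<phi>) \<in> htpy Js G g"
  unfolding htpy_def
proof (induction rule: rtrancl_induct)
  case base then show ?case by simp
next
  case (step y z) then show ?case using htpy1_sym by (meson converse_rtrancl_into_rtrancl)
qed

lemma htpy_trans: "(\<phi>, \<psi>) \<in> htpy Js G g \<Longrightarrow> (\<psi>, \<chi>) \<in> htpy Js G g \<Longrightarrow> (\<phi>, \<chi>) \<in> htpy Js G g"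
  unfolding htpy_def by simp

lemma htpy_refl: "(\<phi>, \<phi>) \<in> htpy Js G g" unfolding htpy_def by simp

lemma htpy_pmap: "(\<phi>, \<psi>) \<in> htpy Js G g \<Longrightarrow> pmap Js G g \<phi> \<Longrightarrow> pmap Js G g \<psi>"
  unfolding htpy_def
proof (induction rule: rtrancl_induct)
  case base then show ?case by simp
next
  case (step y z) then show ?case unfolding htpy1_def by auto
qed

lemma htpy1_comp:
  assumes gl: "goodl K Js fs" and h: "(\<phi>, \<psi>) \<in> htpy1 Js G g"
  shows "(pcomp \<phi> fs K, pcomp \<psi> fs K) \<in> htpy1 K G g"
proof -
  have p: "pmap Js G g \<phi>" "pmap Js G g \<psi>" using h unfolding htpy1_def by auto
  have pc: "pmap K G g (pcomp \<phi> fs K)" "pmap K G g (pcomp \<psi> fs K)" using pmap_pcomp[OF gl p(1)] pmap_pcomp[OF gl p(2)] by auto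
  have bd: "\<forall>x\<in>tbd K. pcomp \<phi> fs K x = pcomp \<psi> fs K x" using pc unfolding pmap_def by auto
  have "(\<forall>x\<in>tverts Js. (\<phi> x, \<psi> x) \<in> snd G) \<or> (\<forall>x\<in>tverts Js. (\<psi> x, \<phi> x) \<in> snd G)"
    using h unfolding htpy1_def by auto
  then have "(\<forall>x\<in>tverts K. (pcomp \<phi> fs K x, pcomp \<psi> fs K x) \<in> snd G) \<or>
             (\<forall>x\<in>tverts K. (pcomp \<psi> fs K x, pcomp \<phi> fs K x) \<in> snd G)"
    using tmap_tverts[OF gl] pcomp_apply by metis
  then show ?thesis using pc bd unfolding htpy1_def by auto
qed

lemma htpy_comp:
  assumes gl: "goodl K Js fs"
  shows "(\<phi>, \<psi>) \<in> htpy Js G g \<Longrightarrow> (pcomp \<phi> fs K, pcomp \<psi> fs K) \<in> htpy K G g"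
  unfolding htpy_def
proof (induction rule: rtrancl_induct)
  case base then show ?case by simp
next
  case (step y z) then show ?case using htpy1_comp[OF gl, of y z] by (meson rtrancl.rtrancl_into_rtrancl)
qed

lemma goodl_upd: "goodl K Js fs \<Longrightarrow> good (K ! i) (Js ! i) f \<Longrightarrow> goodl K Js (fs[i := f])"
  unfolding goodl_def
proof (intro conjI allI impI)
  fix j assume a: "length K = length Js \<and> length fs = length Js \<and> (\<forall>i<length Js. good (K ! i) (Js ! i) (fs ! i))"
    and g: "good (K ! i) (Js ! i) f" and j: "j < length Js"
  show "good (K ! j) (Js ! j) (fs[i := f] ! j)"
    using a g j by (cases "i = j") auto
qed auto

lemma L1:
  assumes gl: "goodl K Js fs" and i: "i < length Js" and H: "(f, f') \<in> H1 (K ! i) (Js ! i)"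
    and p: "pmap Js G g \<phi>"
  shows "(pcomp \<phi> (fs[i := f]) K, pcomp \<phi> (fs[i := f']) K) \<in> htpy1 K G g"
proof -
  have gf: "good (K ! i) (Js ! i) f" "good (K ! i) (Js ! i) f'" using H unfolding H1_def by auto
  have gl1: "goodl K Js (fs[i := f])" and gl2: "goodl K Js (fs[i := f'])" using goodl_upd[OF gl] gf by auto
  have pc: "pmap K G g (pcomp \<phi> (fs[i := f]) K)" "pmap K G g (pcomp \<phi> (fs[i := f']) K)"
    using pmap_pcomp[OF gl1 p] pmap_pcomp[OF gl2 p] by auto
  have bd: "\<forall>x\<in>tbd K. pcomp \<phi> (fs[i := f]) K x = pcomp \<phi> (fs[i := f']) K x" using pc unfolding pmap_def by auto
  have d: "dmap (tgraph Js) G \<phi>" using p unfolding pmap_def by auto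
  have lens: "length K = length Js" "length fs = length Js" using gl unfolding goodl_def by auto
  have key: "(tmap (fs[i := f]) xs, tmap (fs[i := f']) xs) \<in> tarrows Js"
    if xs: "xs \<in> tverts K" and dir: "(f (xs ! i), f' (xs ! i)) \<in> snd (ivl (Js ! i))" for xs
  proof -
    have lx: "length xs = length K" using xs unfolding tverts_def by simp
    have "\<forall>j<length Js. j \<noteq> i \<longrightarrow> tmap (fs[i := f]) xs ! j = tmap (fs[i := f']) xs ! j"
      using lx lens by simp
    moreover have "(tmap (fs[i := f]) xs ! i, tmap (fs[i := f']) xs ! i) \<in> snd (ivl (Js ! i))"
      using dir lx lens i by simp
    ultimately show ?thesis using tmap_tverts[OF gl1 xs] tmap_tverts[OF gl2 xs] i unfolding tarrows_def by auto
  qed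
  have xi: "xs ! i \<le> length (K ! i)" if "xs \<in> tverts K" for xs using that i lens unfolding tverts_def by auto
  have "(\<forall>x\<in>tverts K. (pcomp \<phi> (fs[i := f]) K x, pcomp \<phi> (fs[i := f']) K x) \<in> snd G) \<or>
        (\<forall>x\<in>tverts K. (pcomp \<phi> (fs[i := f']) K x, pcomp \<phi> (fs[i := f]) K x) \<in> snd G)"
  proof -
    have "(\<forall>y\<le>length (K ! i). (f y, f' y) \<in> snd (ivl (Js ! i))) \<or> (\<forall>y\<le>length (K ! i). (f' y, f y) \<in> snd (ivl (Js ! i)))"
      using H unfolding H1_def by auto
    then show ?thesis
    proof
      assume a: "\<forall>y\<le>length (K ! i). (f y, f' y) \<in> snd (ivl (Js ! i))"
      have "\<forall>x\<in>tverts K. (pcomp \<phi> (fs[i := f]) K x, pcomp \<phi> (fs[i := f']) K x) \<in> snd G"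
      proof
        fix x assume x: "x \<in> tverts K"
        have "(tmap (fs[i := f]) x, tmap (fs[i := f']) x) \<in> tarrows Js" using key[OF x] a xi[OF x] by simp
        then show "(pcomp \<phi> (fs[i := f]) K x, pcomp \<phi> (fs[i := f']) K x) \<in> snd G"
          unfolding pcomp_apply[OF x] using d unfolding dmap_def tgraph_def by auto
      qed
      then show ?thesis by simp
    next
      assume a: "\<forall>y\<le>length (K ! i). (f' y, f y) \<in> snd (ivl (Js ! i))"
      have "\<forall>x\<in>tverts K. (pcomp \<phi> (fs[i := f']) K x, pcomp \<phi> (fs[i := f]) K x) \<in> snd G"
      proof
        fix x assume x: "x \<in> tverts K"
        have "(f' (x ! i), f (x ! i)) \<in> snd (ivl (Js ! i))" using a xi[OF x] by simp
        have key2: "(tmap (fs[i := f']) x, tmap (fs[i := f]) x) \<in> tarrows Js"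
        proof -
          have lx: "length x = length K" using x unfolding tverts_def by simp
          have "\<forall>j<length Js. j \<noteq> i \<longrightarrow> tmap (fs[i := f']) x ! j = tmap (fs[i := f]) x ! j"
            using lx lens by simp
          moreover have "(tmap (fs[i := f']) x ! i, tmap (fs[i := f]) x ! i) \<in> snd (ivl (Js ! i))"
            using \<open>(f' (x ! i), f (x ! i)) \<in> snd (ivl (Js ! i))\<close> lx lens i by simp
          ultimately show ?thesis using tmap_tverts[OF gl1 x] tmap_tverts[OF gl2 x] i unfolding tarrows_def by auto
        qed
        then show "(pcomp \<phi> (fs[i := f']) K x, pcomp \<phi> (fs[i := f]) K x) \<in> snd G"
          unfolding pcomp_apply[OF x] using d unfolding dmap_def tgraph_def by auto
      qed
      then show ?thesis by simp
    qed
  qed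
  then show ?thesis using pc bd unfolding htpy1_def by auto
qed

lemma L2:
  assumes gl: "goodl K Js fs" and i: "i < length Js" and p: "pmap Js G g \<phi>"
  shows "(f, f') \<in> (H1 (K ! i) (Js ! i))\<^sup>* \<Longrightarrow> (pcomp \<phi> (fs[i := f]) K, pcomp \<phi> (fs[i := f']) K) \<in> htpy K G g"
proof (induction rule: rtrancl_induct)
  case base then show ?case by (simp add: htpy_refl)
next
  case (step y z)
  have gy: "good (K ! i) (Js ! i) y" using step(2) unfolding H1_def by auto
  have "(pcomp \<phi> ((fs[i := y])[i := y]) K, pcomp \<phi> ((fs[i := y])[i := z]) K) \<in> htpy1 K G g"
    using L1[OF goodl_upd[OF gl gy] i step(2) p] .
  then have "(pcomp \<phi> (fs[i := y]) K, pcomp \<phi> (fs[i := z]) K) \<in> htpy K G g" unfolding htpy_def by simp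
  then show ?case by (rule htpy_trans[OF step.IH])
qed

lemma L4:
  assumes gf: "goodl K Js fs" and gg: "goodl K Js gs" and p: "pmap Js G g \<phi>"
  shows "(pcomp \<phi> fs K, pcomp \<phi> gs K) \<in> htpy K G g"
proof -
  define n where "n = length Js"
  define mix where "mix k = map (\<lambda>j. if j < k then gs ! j else fs ! j) [0..<n]" for k
  have lens: "length fs = n" "length gs = n" "length K = n" using gf gg unfolding goodl_def n_def by auto
  have gm: "goodl K Js (mix k)" for k using gf gg unfolding goodl_def mix_def n_def by auto
  have "k \<le> n \<Longrightarrow> (pcomp \<phi> fs K, pcomp \<phi> (mix k) K) \<in> htpy K G g" for k
  proof (induction k)
    case 0
    have "mix 0 = fs" unfolding mix_def using lens by (intro nth_equalityI) auto
    then show ?case by (simp add: htpy_refl)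
  next
    case (Suc k)
    have k: "k < length Js" using Suc n_def by simp
    have e1: "(mix k)[k := fs ! k] = mix k" unfolding mix_def using lens k n_def by (intro nth_equalityI) (auto simp: nth_list_update)
    have e2: "(mix k)[k := gs ! k] = mix (Suc k)" unfolding mix_def using lens k n_def by (intro nth_equalityI) (auto simp: nth_list_update)
    have "(fs ! k, gs ! k) \<in> (H1 (K ! k) (Js ! k))\<^sup>*"
      using good_connected gf gg k unfolding goodl_def by blast
    from L2[OF gm[of k] k p this] have "(pcomp \<phi> (mix k) K, pcomp \<phi> (mix (Suc k)) K) \<in> htpy K G g" using e1 e2 by simp
    then show ?case using Suc htpy_trans by (metis Suc_leD)
  qed
  moreover have "mix n = gs" unfolding mix_def using lens by (intro nth_equalityI) auto
  ultimately show ?thesis by (metis order_refl)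
qed

lemma hset_elem: "c \<in> hset Js G g \<Longrightarrow> \<exists>\<phi>. pmap Js G g \<phi> \<and> c = htpy Js G g `` {\<phi>}"
  unfolding hset_def quotient_def by auto

lemma htpy_class_eq: assumes h: "(\<phi>, \<psi>) \<in> htpy Js G g"
  shows "htpy Js G g `` {\<phi>} = htpy Js G g `` {\<psi>}"
proof (intro set_eqI iffI)
  fix x assume "x \<in> htpy Js G g `` {\<phi>}"
  then show "x \<in> htpy Js G g `` {\<psi>}" using htpy_trans[OF htpy_sym[OF h]] by auto
next
  fix x assume "x \<in> htpy Js G g `` {\<psi>}"
  then show "x \<in> htpy Js G g `` {\<phi>}" using htpy_trans[OF h] by auto
qed

lemma precomp_class:
  assumes p: "pmap Js G g \<phi>" and gl: "goodl K Js fs"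
  shows "precomp G g K fs (htpy Js G g `` {\<phi>}) = htpy K G g `` {pcomp \<phi> fs K}"
proof
  show "precomp G g K fs (htpy Js G g `` {\<phi>}) \<subseteq> htpy K G g `` {pcomp \<phi> fs K}"
  proof
    fix \<psi> assume "\<psi> \<in> precomp G g K fs (htpy Js G g `` {\<phi>})"
    then obtain \<phi>' where a: "(\<phi>, \<phi>') \<in> htpy Js G g" "(pcomp \<phi>' fs K, \<psi>) \<in> htpy K G g"
      unfolding precomp_def pcomp_def by auto
    have "(pcomp \<phi> fs K, pcomp \<phi>' fs K) \<in> htpy K G g" using htpy_comp[OF gl a(1)] .
    then show "\<psi> \<in> htpy K G g `` {pcomp \<phi> fs K}" using a(2) htpy_trans by fastforce
  qed
next
  show "htpy K G g `` {pcomp \<phi> fs K} \<subseteq> precomp G g K fs (htpy Js G g `` {\<phi>})"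
    unfolding precomp_def pcomp_def using htpy_refl by fastforce
qed

lemma precomp_hset:
  assumes c: "c \<in> hset Js G g" and gl: "goodl K Js fs"
  shows "precomp G g K fs c \<in> hset K G g"
proof -
  obtain \<phi> where p: "pmap Js G g \<phi>" "c = htpy Js G g `` {\<phi>}" using hset_elem[OF c] by blast
  have "pmap K G g (pcomp \<phi> fs K)" using pmap_pcomp[OF gl p(1)] .
  then show ?thesis using precomp_class[OF p(1) gl] p(2) unfolding hset_def by (auto intro: quotientI)
qed

lemma F1:
  assumes c: "c \<in> hset Js G g" and gf: "goodl K Js fs" and gg: "goodl K Js gs"
  shows "precomp G g K fs c = precomp G g K gs c"
proof -
  obtain \<phi> where p: "pmap Js G g \<phi>" "c = htpy Js G g `` {\<phi>}" using hset_elem[OF c] by blast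
  show ?thesis using precomp_class[OF p(1) gf] precomp_class[OF p(1) gg] p(2)
      htpy_class_eq[OF L4[OF gf gg p(1)]] by simp
qed

definition clist :: "interval list \<Rightarrow> (nat \<Rightarrow> nat) list \<Rightarrow> (nat \<Rightarrow> nat) list \<Rightarrow> (nat \<Rightarrow> nat) list" where
  "clist K fs gs = map (\<lambda>i. restrict (fs ! i \<circ> gs ! i) {0..length (K ! i)}) [0..<length K]"

lemma dmap_restrict_iff: "dmap (ivl J') (ivl J) (restrict f {0..length J'}) \<longleftrightarrow> dmap (ivl J') (ivl J) f"
  unfolding dmap_ivl_iff by auto

lemma mono_restrict_iff: "mono_on {0..L} (restrict f {0..L}) \<longleftrightarrow> mono_on {0..L} f"
  unfolding mono_on_def by auto

lemma good_compose:
  assumes f: "good K' J f" and h: "good K K' h"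
  shows "good K J (restrict (f \<circ> h) {0..length K})"
proof -
  have "dmap (ivl K) (ivl J) (f \<circ> h)"
    using f h unfolding good_def dmap_def by auto
  moreover have "mono_on {0..length K} (f \<circ> h)"
    unfolding mono_on_def using good_mono[OF f] good_mono[OF h] good_le[OF h] by auto
  moreover have "(f \<circ> h) 0 = 0" "(f \<circ> h) (length K) = length J" using f h unfolding good_def by auto
  ultimately show ?thesis unfolding good_def dmap_restrict_iff mono_restrict_iff by simp
qed

lemma goodl_clist:
  assumes f: "goodl K' Js fs" and h: "goodl K K' gs"
  shows "goodl K Js (clist K fs gs)"
  using f h good_compose unfolding goodl_def clist_def by auto

lemma tmap_clist:
  assumes f: "goodl K' Js fs" and h: "goodl K K' gs" and x: "x \<in> tverts K"
  shows "tmap (clist K fs gs) x = tmap fs (tmap gs x)"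
proof -
  have lx: "length x = length K" "length K = length K'" using x h unfolding tverts_def goodl_def by auto
  show ?thesis
  proof (rule nth_equalityI)
    show "length (tmap (clist K fs gs) x) = length (tmap fs (tmap gs x))" by simp
    fix i assume "i < length (tmap (clist K fs gs) x)"
    then have i: "i < length x" by simp
    have "x ! i \<le> length (K ! i)" using x i lx unfolding tverts_def by auto
    then show "tmap (clist K fs gs) x ! i = tmap fs (tmap gs x) ! i"
      using i lx unfolding clist_def by simp
  qed
qed

lemma pcomp_pcomp:
  assumes f: "goodl K' Js fs" and h: "goodl K K' gs"
  shows "pcomp (pcomp \<phi> fs K') gs K = pcomp \<phi> (clist K fs gs) K"
proof
  fix x show "pcomp (pcomp \<phi> fs K') gs K x = pcomp \<phi> (clist K fs gs) K x"
  proof (cases "x \<in> tverts K")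
    case True
    then show ?thesis
      by (simp only: pcomp_apply[OF True] pcomp_apply[OF tmap_tverts[OF h True]] tmap_clist[OF f h True])
  next
    case False then show ?thesis unfolding pcomp_def by simp
  qed
qed

lemma F2:
  assumes c: "c \<in> hset Js G g" and f: "goodl K' Js fs" and h: "goodl K K' gs"
  shows "precomp G g K gs (precomp G g K' fs c) = precomp G g K (clist K fs gs) c"
proof -
  obtain \<phi> where p: "pmap Js G g \<phi>" "c = htpy Js G g `` {\<phi>}" using hset_elem[OF c] by blast
  have p2: "pmap K' G g (pcomp \<phi> fs K')" using pmap_pcomp[OF f p(1)] .
  have e: "pcomp (pcomp \<phi> fs K') gs K = pcomp \<phi> (clist K fs gs) K" by (rule pcomp_pcomp[OF f h])
  show ?thesis unfolding p(2) precomp_class[OF p(1) f] precomp_class[OF p2 h] precomp_class[OF p(1) goodl_clist[OF f h]] e ..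
qed

definition shrl :: "interval list \<Rightarrow> interval list \<Rightarrow> (nat \<Rightarrow> nat) list \<Rightarrow> bool" where
  "shrl K Js fs \<longleftrightarrow> length K = length Js \<and> length fs = length Js \<and> (\<forall>i<length Js. shrinking (K ! i) (Js ! i) (fs ! i))"

lemma shrl_goodl: "shrl K Js fs \<Longrightarrow> goodl K Js fs"
  unfolding shrl_def goodl_def using shrinking_good by auto

lemma shrinking_restrict_iff:
  "shrinking J' J (restrict f {0..length J'}) \<longleftrightarrow>
    dmap (ivl J') (ivl J) f \<and> f ` {0..length J'} = {0..length J} \<and> mono_on {0..length J'} f"
  unfolding shrinking_def dmap_restrict_iff mono_restrict_iff by simp

lemma shrinking_ext: "shrinking J' J f \<Longrightarrow> restrict f {0..length J'} = f"
  unfolding shrinking_def by (simp add: extensional_restrict)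

lemma shrinking_compose:
  assumes f: "shrinking K' J f" and h: "shrinking K K' h"
  shows "shrinking K J (restrict (f \<circ> h) {0..length K})"
proof -
  have "dmap (ivl K) (ivl J) (f \<circ> h)"
    using f h unfolding shrinking_def dmap_def by auto
  moreover have "(f \<circ> h) ` {0..length K} = {0..length J}"
  proof -
    have "(f \<circ> h) ` {0..length K} = f ` (h ` {0..length K})" by (rule image_comp[symmetric])
    then show ?thesis using f h unfolding shrinking_def by simp
  qed
  moreover have "mono_on {0..length K} (f \<circ> h)"
    unfolding mono_on_def using good_mono[OF shrinking_good[OF f]] good_mono[OF shrinking_good[OF h]]
      good_le[OF shrinking_good[OF h]] by auto
  ultimately show ?thesis unfolding shrinking_restrict_iff by simp
qed

lemma shrl_clist:
  assumes f: "shrl K' Js fs" and h: "shrl K K' gs"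
  shows "shrl K Js (clist K fs gs)"
  using f h shrinking_compose unfolding shrl_def clist_def by auto

lemma shrinking_id: "shrinking J J (restrict id {0..length J})"
  unfolding shrinking_restrict_iff dmap_ivl_iff by (auto simp: AJ_iff mono_on_def)

lemma cospan2:
  "shrinking (J1 @ J2) J1 (restrict (\<lambda>y. min y (length J1)) {0..length (J1 @ J2)})"
  "shrinking (J1 @ J2) J2 (restrict (\<lambda>y. y - length J1) {0..length (J1 @ J2)})"
proof -
  show "shrinking (J1 @ J2) J1 (restrict (\<lambda>y. min y (length J1)) {0..length (J1 @ J2)})"
    unfolding shrinking_restrict_iff
  proof (intro conjI)
    show "dmap (ivl (J1 @ J2)) (ivl J1) (\<lambda>y. min y (length J1))"
      unfolding dmap_ivl_iff by (auto simp: AJ_iff nth_append min_def)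
    show "(\<lambda>y. min y (length J1)) ` {0..length (J1 @ J2)} = {0..length J1}"
    proof
      show "{0..length J1} \<subseteq> (\<lambda>y. min y (length J1)) ` {0..length (J1 @ J2)}"
      proof
        fix y assume "y \<in> {0..length J1}"
        then show "y \<in> (\<lambda>y. min y (length J1)) ` {0..length (J1 @ J2)}"
          by (intro image_eqI[of _ _ y]) auto
      qed
    qed auto
    show "mono_on {0..length (J1 @ J2)} (\<lambda>y. min y (length J1))"
      unfolding mono_on_def by auto
  qed
  show "shrinking (J1 @ J2) J2 (restrict (\<lambda>y. y - length J1) {0..length (J1 @ J2)})"
    unfolding shrinking_restrict_iff
  proof (intro conjI)
    show "dmap (ivl (J1 @ J2)) (ivl J2) (\<lambda>y. y - length J1)"
      unfolding dmap_ivl_iff by (auto simp: AJ_iff nth_append Suc_diff_le)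
    show "(\<lambda>y. y - length J1) ` {0..length (J1 @ J2)} = {0..length J2}"
    proof
      show "{0..length J2} \<subseteq> (\<lambda>y. y - length J1) ` {0..length (J1 @ J2)}"
      proof
        fix y assume "y \<in> {0..length J2}"
        then show "y \<in> (\<lambda>y. y - length J1) ` {0..length (J1 @ J2)}"
          by (intro image_eqI[of _ _ "y + length J1"]) auto
      qed
    qed auto
    show "mono_on {0..length (J1 @ J2)} (\<lambda>y. y - length J1)"
      unfolding mono_on_def by auto
  qed
qed

lemma cospan_list: "\<exists>K. \<forall>i<length Ks. \<exists>f. shrinking K (Ks ! i) f"
proof (induction Ks)
  case Nil then show ?case by simp
next
  case (Cons J Ks)
  then obtain K where K: "\<forall>i<length Ks. \<exists>f. shrinking K (Ks ! i) f" by blast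
  have "\<forall>i<length (J # Ks). \<exists>f. shrinking (J @ K) ((J # Ks) ! i) f"
  proof (intro allI impI)
    fix i assume i: "i < length (J # Ks)"
    show "\<exists>f. shrinking (J @ K) ((J # Ks) ! i) f"
    proof (cases i)
      case 0 then show ?thesis using cospan2(1) by auto
    next
      case (Suc j)
      then obtain f where f: "shrinking K (Ks ! j) f" using K i by auto
      then show ?thesis using Suc shrinking_compose[OF f cospan2(2)[of J K]] by auto
    qed
  qed
  then show ?case by blast
qed

lemma fst_Shr[simp]: "fst Shr = UNIV" unfolding Shr_def by simp
lemma snd_Shr: "m \<in> snd Shr \<longleftrightarrow> shrinking (fst m) (fst (snd m)) (snd (snd m))"
  unfolding Shr_def by (cases m) auto

lemma pobjs_T[simp]: "pobjs (replicate n Shr) = {Js. length Js = n}"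
  unfolding pobjs_def by auto

lemma pcarrier_T: "(Js, c) \<in> pcarrier (replicate n Shr) G g \<longleftrightarrow> length Js = n \<and> c \<in> hset Js G g"
  unfolding pcarrier_def by simp

lemma pgen_T_elim:
  assumes "((Js, c), (Js', c')) \<in> pgen (replicate n Shr) G g"
  shows "length Js = n \<and> length Js' = n \<and> c \<in> hset Js G g \<and> (\<exists>fs. shrl Js' Js fs \<and> c' = precomp G g Js' fs c)"
proof -
  obtain ms where ms: "length Js = n" "length Js' = n" "c \<in> hset Js G g" "length ms = n"
    "\<forall>i<n. ms ! i \<in> snd Shr \<and> fst (ms ! i) = Js' ! i \<and> fst (snd (ms ! i)) = Js ! i"
    "c' = precomp G g Js' (map (\<lambda>m. snd (snd m)) ms) c"
    using assms unfolding pgen_def by auto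
  have "shrl Js' Js (map (\<lambda>m. snd (snd m)) ms)" unfolding shrl_def using ms(1,2,4,5) snd_Shr by auto
  then show ?thesis using ms by blast
qed

lemma pgen_T_intro:
  assumes "length Js = n" "shrl Js' Js fs" "c \<in> hset Js G g"
  shows "((Js, c), (Js', precomp G g Js' fs c)) \<in> pgen (replicate n Shr) G g"
proof -
  define ms where "ms = map (\<lambda>i. (Js' ! i, Js ! i, fs ! i)) [0..<n]"
  have l: "length Js' = n" "length fs = n" using assms unfolding shrl_def by auto
  have "map (\<lambda>m. snd (snd m)) ms = fs" unfolding ms_def using l by (intro nth_equalityI) auto
  moreover have "\<forall>i<n. ms ! i \<in> snd Shr \<and> fst (ms ! i) = Js' ! i \<and> fst (snd (ms ! i)) = Js ! i"
    unfolding ms_def using assms(2) l unfolding shrl_def by (auto simp: snd_Shr)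
  moreover have "length ms = n" unfolding ms_def by simp
  ultimately show ?thesis unfolding pgen_def using assms l by fastforce
qed

definition simr :: "'a digraph \<Rightarrow> 'a \<Rightarrow> interval list \<times> (nat list \<Rightarrow> 'a) set \<Rightarrow> interval list \<times> (nat list \<Rightarrow> 'a) set \<Rightarrow> bool" where
  "simr G g x y \<longleftrightarrow> (\<exists>K fs1 fs2. shrl K (fst x) fs1 \<and> shrl K (fst y) fs2 \<and>
      precomp G g K fs1 (snd x) = precomp G g K fs2 (snd y))"

definition idl :: "interval list \<Rightarrow> (nat \<Rightarrow> nat) list" where
  "idl Js = map (\<lambda>i. restrict id {0..length (Js ! i)}) [0..<length Js]"

lemma shrl_idl: "shrl Js Js (idl Js)" unfolding shrl_def idl_def using shrinking_id by auto

lemma cospan_shrl: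
  assumes "length K = length Js"
  shows "\<exists>K'' a b. shrl K'' K a \<and> shrl K'' Js b"
proof -
  define K'' where "K'' = map (\<lambda>i. K ! i @ Js ! i) [0..<length K]"
  define a where "a = map (\<lambda>i. restrict (\<lambda>y. min y (length (K ! i))) {0..length (K ! i @ Js ! i)}) [0..<length K]"
  define b where "b = map (\<lambda>i. restrict (\<lambda>y. y - length (K ! i)) {0..length (K ! i @ Js ! i)}) [0..<length K]"
  have "shrl K'' K a" unfolding shrl_def K''_def a_def using cospan2(1) by auto
  moreover have "shrl K'' Js b" unfolding shrl_def K''_def b_def using cospan2(2) assms by auto
  ultimately show ?thesis by blast
qed

lemma prel_sym: "(x, y) \<in> (E \<union> E\<inverse>)\<^sup>* \<Longrightarrow> (y, x) \<in> (E \<union> E\<inverse>)\<^sup>*"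
  by (metis converse_Un converse_converse rtrancl_converseI sup_commute)

lemma class_eq: "(x, y) \<in> (E \<union> E\<inverse>)\<^sup>* \<Longrightarrow> (E \<union> E\<inverse>)\<^sup>* `` {x} = (E \<union> E\<inverse>)\<^sup>* `` {y}"
proof (intro set_eqI iffI)
  fix z assume "(x, y) \<in> (E \<union> E\<inverse>)\<^sup>*" "z \<in> (E \<union> E\<inverse>)\<^sup>* `` {x}"
  then show "z \<in> (E \<union> E\<inverse>)\<^sup>* `` {y}" using prel_sym by (metis Image_singleton_iff rtrancl_trans)
next
  fix z assume "(x, y) \<in> (E \<union> E\<inverse>)\<^sup>*" "z \<in> (E \<union> E\<inverse>)\<^sup>* `` {y}"
  then show "z \<in> (E \<union> E\<inverse>)\<^sup>* `` {x}" by (metis Image_singleton_iff rtrancl_trans)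
qed

lemma claimA:
  assumes x: "x \<in> pcarrier (replicate n Shr) G g"
  shows "(x, y) \<in> prel (replicate n Shr) G g \<Longrightarrow> y \<in> pcarrier (replicate n Shr) G g \<and> simr G g x y"
  unfolding prel_def
proof (induction rule: rtrancl_induct)
  case base
  obtain Js c where xc: "x = (Js, c)" by (cases x)
  show ?case using x shrl_idl[of Js] unfolding simr_def xc by auto
next
  case (step z z')
  obtain Js0 c0 where xc: "x = (Js0, c0)" by (cases x)
  have c0: "c0 \<in> hset Js0 G g" "length Js0 = n" using x xc pcarrier_T[of _ _ _ G g] by auto
  obtain K u0 u where s: "shrl K Js0 u0" "shrl K (fst z) u" "precomp G g K u0 c0 = precomp G g K u (snd z)"
    using step.IH xc unfolding simr_def by auto
  from step.hyps(2) show ?case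
  proof
    assume zz: "(z, z') \<in> pgen (replicate n Shr) G g"
    obtain Js c where zc: "z = (Js, c)" by (cases z)
    obtain Js' c' where zc': "z' = (Js', c')" by (cases z')
    obtain fs where g: "length Js = n" "length Js' = n" "c \<in> hset Js G g" "shrl Js' Js fs" "c' = precomp G g Js' fs c"
      using pgen_T_elim[of Js c Js' c' n G g] zz zc zc' by auto
    have lK: "length K = length Js'" using s(2) g zc unfolding shrl_def by simp
    obtain K'' a b where ab: "shrl K'' K a" "shrl K'' Js' b" using cospan_shrl[OF lK] by blast
    have "precomp G g K'' b c' = precomp G g K'' (clist K'' fs b) c"
      using F2[OF g(3) shrl_goodl[OF g(4)] shrl_goodl[OF ab(2)]] g(5) by simp
    also have "\<dots> = precomp G g K'' (clist K'' u a) c"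
      using F1[OF g(3) goodl_clist[OF shrl_goodl[OF g(4)] shrl_goodl[OF ab(2)]]
          goodl_clist[OF shrl_goodl[OF s(2)[unfolded zc fst_conv]] shrl_goodl[OF ab(1)]]] .
    also have "\<dots> = precomp G g K'' a (precomp G g K u c)"
      using F2[OF g(3) shrl_goodl[OF s(2)[unfolded zc fst_conv]] shrl_goodl[OF ab(1)]] by simp
    also have "\<dots> = precomp G g K'' a (precomp G g K u0 c0)" using s(3) zc by simp
    also have "\<dots> = precomp G g K'' (clist K'' u0 a) c0"
      using F2[OF c0(1) shrl_goodl[OF s(1)] shrl_goodl[OF ab(1)]] by simp
    finally have "simr G g x z'" unfolding simr_def xc zc' using shrl_clist[OF s(1) ab(1)] ab(2) by auto
    moreover have "z' \<in> pcarrier (replicate n Shr) G g"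
      using zc' g precomp_hset[OF g(3) shrl_goodl[OF g(4)]] pcarrier_T[of _ _ _ G g] by auto
    ultimately show ?thesis by simp
  next
    assume zz: "(z, z') \<in> (pgen (replicate n Shr) G g)\<inverse>"
    obtain Js c where zc: "z' = (Js, c)" by (cases z')
    obtain Js' c' where zc': "z = (Js', c')" by (cases z)
    obtain fs where g: "length Js = n" "length Js' = n" "c \<in> hset Js G g" "shrl Js' Js fs" "c' = precomp G g Js' fs c"
      using pgen_T_elim[of Js c Js' c' n G g] zz zc zc' by auto
    have "precomp G g K u0 c0 = precomp G g K u (precomp G g Js' fs c)" using s(3) zc' g(5) by simp
    also have "\<dots> = precomp G g K (clist K fs u) c"
      using F2[OF g(3) shrl_goodl[OF g(4)] shrl_goodl[OF s(2)[unfolded zc' fst_conv]]] .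
    finally have "simr G g x z'" unfolding simr_def xc zc
      using shrl_clist[OF g(4) s(2)[unfolded zc' fst_conv]] s(1) by auto
    moreover have "z' \<in> pcarrier (replicate n Shr) G g" using zc g pcarrier_T[of _ _ _ G g] by auto
    ultimately show ?thesis by simp
  qed
qed

lemma choice_nat: assumes "\<forall>i<n. \<exists>p. P i p" shows "\<exists>F. \<forall>i<n. P i (F i)"
proof -
  have "\<forall>i\<in>{..<n}. \<exists>p. P i p" using assms by simp
  from bchoice[OF this] show ?thesis by auto
qed

lemma nice_mor: "nice_subcat S \<Longrightarrow> (J', J, f) \<in> snd S \<Longrightarrow> shrinking J' J f"
proof -
  assume a: "nice_subcat S" "(J', J, f) \<in> snd S"
  then have "(J', J, f) \<in> snd Shr" unfolding nice_subcat_def subcat_of_Shr_def by blast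
  then show ?thesis using snd_Shr[of "(J', J, f)"] by simp
qed

lemma nice_cov: "nice_subcat S \<Longrightarrow> \<exists>J'\<in>fst S. \<exists>f. shrinking J' J f"
  unfolding nice_subcat_def by blast

lemma nice_fill: "nice_subcat S \<Longrightarrow> J \<in> fst S \<Longrightarrow> J' \<in> fst S \<Longrightarrow> shrinking J' J f \<Longrightarrow> \<exists>f'. (J', J, f') \<in> snd S"
  unfolding nice_subcat_def by blast

lemma pgen_intro:
  assumes "Js \<in> pobjs Ss" "Js' \<in> pobjs Ss" "c \<in> hset Js G g"
    "\<forall>i<length Ss. (Js' ! i, Js ! i, F i) \<in> snd (Ss ! i)"
  shows "((Js, c), (Js', precomp G g Js' (map F [0..<length Ss]) c)) \<in> pgen Ss G g"
proof -
  define ms where "ms = map (\<lambda>i. (Js' ! i, Js ! i, F i)) [0..<length Ss]"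
  have a1: "map (\<lambda>m. snd (snd m)) ms = map F [0..<length Ss]" unfolding ms_def by simp
  have a2: "\<forall>i<length Ss. ms ! i \<in> snd (Ss ! i) \<and> fst (ms ! i) = Js' ! i \<and> fst (snd (ms ! i)) = Js ! i"
    unfolding ms_def using assms(4) by auto
  have a3: "length ms = length Ss" unfolding ms_def by simp
  show ?thesis unfolding pgen_def mem_Collect_eq
    apply (rule exI[of _ Js], rule exI[of _ Js'], rule exI[of _ c], rule exI[of _ ms])
    using assms a1 a2 a3 by simp
qed

lemma pobjs_len: "Js \<in> pobjs Ss \<Longrightarrow> length Js = length Ss" unfolding pobjs_def by simp

lemma claimB:
  assumes Ss: "\<forall>S\<in>set Ss. nice_subcat S" and x: "(Js1, c1) \<in> pcarrier Ss G g"
    and y: "(Js2, c2) \<in> pcarrier Ss G g" and sim: "simr G g (Js1, c1) (Js2, c2)"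
  shows "((Js1, c1), (Js2, c2)) \<in> prel Ss G g"
proof -
  define n where "n = length Ss"
  have o1: "Js1 \<in> pobjs Ss" "c1 \<in> hset Js1 G g" and o2: "Js2 \<in> pobjs Ss" "c2 \<in> hset Js2 G g"
    using x y unfolding pcarrier_def by auto
  have l12: "length Js1 = n" "length Js2 = n" using o1 o2 pobjs_len n_def by auto
  obtain K u1 u2 where s: "shrl K Js1 u1" "shrl K Js2 u2" "precomp G g K u1 c1 = precomp G g K u2 c2"
    using sim unfolding simr_def by auto
  have lK: "length K = n" using s(1) l12 unfolding shrl_def by simp
  have niceI: "nice_subcat (Ss ! i)" if "i < n" for i using Ss that n_def by simp
  have "\<forall>i<n. \<exists>p. fst p \<in> fst (Ss ! i) \<and> shrinking (fst p) (K ! i) (snd p)"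
  proof (intro allI impI)
    fix i assume i: "i < n"
    obtain J' f where "J' \<in> fst (Ss ! i)" "shrinking J' (K ! i) f" using nice_cov[OF niceI[OF i]] by blast
    then show "\<exists>p. fst p \<in> fst (Ss ! i) \<and> shrinking (fst p) (K ! i) (snd p)" by (intro exI[of _ "(J', f)"]) simp
  qed
  from choice_nat[OF this] obtain P where P: "\<forall>i<n. fst (P i) \<in> fst (Ss ! i) \<and> shrinking (fst (P i)) (K ! i) (snd (P i))"
    by blast
  define K' where "K' = map (\<lambda>i. fst (P i)) [0..<n]"
  define w where "w = map (\<lambda>i. snd (P i)) [0..<n]"
  have sw: "shrl K' K w" unfolding shrl_def K'_def w_def using P lK by auto
  have K'o: "K' \<in> pobjs Ss" unfolding pobjs_def K'_def using P n_def by auto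
  have v1: "shrl K' Js1 (clist K' u1 w)" using shrl_clist[OF s(1) sw] .
  have v2: "shrl K' Js2 (clist K' u2 w)" using shrl_clist[OF s(2) sw] .
  have "\<forall>i<n. \<exists>f. (K' ! i, Js1 ! i, f) \<in> snd (Ss ! i)"
  proof (intro allI impI)
    fix i assume i: "i < n"
    show "\<exists>f. (K' ! i, Js1 ! i, f) \<in> snd (Ss ! i)"
      using nice_fill[OF niceI[OF i], of "Js1 ! i" "K' ! i"] o1 K'o v1 i l12 n_def unfolding pobjs_def shrl_def by auto
  qed
  from choice_nat[OF this] obtain m1 where m1: "\<forall>i<n. (K' ! i, Js1 ! i, m1 i) \<in> snd (Ss ! i)" by blast
  have "\<forall>i<n. \<exists>f. (K' ! i, Js2 ! i, f) \<in> snd (Ss ! i)"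
  proof (intro allI impI)
    fix i assume i: "i < n"
    show "\<exists>f. (K' ! i, Js2 ! i, f) \<in> snd (Ss ! i)"
      using nice_fill[OF niceI[OF i], of "Js2 ! i" "K' ! i"] o2 K'o v2 i l12 n_def unfolding pobjs_def shrl_def by auto
  qed
  from choice_nat[OF this] obtain m2 where m2: "\<forall>i<n. (K' ! i, Js2 ! i, m2 i) \<in> snd (Ss ! i)" by blast
  have f1: "shrl K' Js1 (map m1 [0..<n])" unfolding shrl_def using m1 nice_mor[OF niceI] l12 K'o pobjs_len n_def by auto
  have f2: "shrl K' Js2 (map m2 [0..<n])" unfolding shrl_def using m2 nice_mor[OF niceI] l12 K'o pobjs_len n_def by auto
  have "precomp G g K' (map m1 [0..<n]) c1 = precomp G g K' (clist K' u1 w) c1"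
    using F1[OF o1(2) shrl_goodl[OF f1] shrl_goodl[OF v1]] .
  also have "\<dots> = precomp G g K' w (precomp G g K u1 c1)"
    using F2[OF o1(2) shrl_goodl[OF s(1)] shrl_goodl[OF sw]] by simp
  also have "\<dots> = precomp G g K' w (precomp G g K u2 c2)" using s(3) by simp
  also have "\<dots> = precomp G g K' (clist K' u2 w) c2"
    using F2[OF o2(2) shrl_goodl[OF s(2)] shrl_goodl[OF sw]] by simp
  also have "\<dots> = precomp G g K' (map m2 [0..<n]) c2"
    using F1[OF o2(2) shrl_goodl[OF f2] shrl_goodl[OF v2]] by simp
  finally have eq: "precomp G g K' (map m1 [0..<n]) c1 = precomp G g K' (map m2 [0..<n]) c2" .
  have g1: "((Js1, c1), (K', precomp G g K' (map m1 [0..<n]) c1)) \<in> pgen Ss G g"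
    using pgen_intro[OF o1(1) K'o o1(2), of m1] m1 n_def by simp
  have g2: "((Js2, c2), (K', precomp G g K' (map m1 [0..<n]) c1)) \<in> pgen Ss G g"
    using pgen_intro[OF o2(1) K'o o2(2), of m2] m2 n_def eq by simp
  let ?E = "pgen Ss G g \<union> (pgen Ss G g)\<inverse>"
  have e1: "((Js1, c1), (K', precomp G g K' (map m1 [0..<n]) c1)) \<in> ?E" using g1 by blast
  have e2: "((K', precomp G g K' (map m1 [0..<n]) c1), (Js2, c2)) \<in> ?E" using g2 by blast
  show ?thesis unfolding prel_def using rtrancl_trans[OF r_into_rtrancl[OF e1] r_into_rtrancl[OF e2]] .
qed

lemma pgen_sub:
  assumes Ss: "\<forall>S\<in>set Ss. nice_subcat S" and n: "length Ss = n"
  shows "pgen Ss G g \<subseteq> pgen (replicate n Shr) G g"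
proof
  fix p assume "p \<in> pgen Ss G g"
  then obtain Js Js' c ms where p: "p = ((Js, c), (Js', precomp G g Js' (map (\<lambda>m. snd (snd m)) ms) c))"
    "Js \<in> pobjs Ss" "Js' \<in> pobjs Ss" "c \<in> hset Js G g" "length ms = length Ss"
    "\<forall>i<length Ss. ms ! i \<in> snd (Ss ! i) \<and> fst (ms ! i) = Js' ! i \<and> fst (snd (ms ! i)) = Js ! i"
    unfolding pgen_def by blast
  have "shrl Js' Js (map (\<lambda>m. snd (snd m)) ms)"
    unfolding shrl_def
  proof (intro conjI allI impI)
    show "length Js' = length Js" "length (map (\<lambda>m. snd (snd m)) ms) = length Js" using p pobjs_len by auto
    fix i assume i: "i < length Js"
    then have i': "i < length Ss" using p pobjs_len by auto
    have "nice_subcat (Ss ! i)" using Ss i' by simp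
    moreover have "ms ! i = (Js' ! i, Js ! i, snd (snd (ms ! i)))" using p(6) i' by (metis prod.collapse)
    ultimately show "shrinking (Js' ! i) (Js ! i) (map (\<lambda>m. snd (snd m)) ms ! i)"
      using nice_mor p(6) i' p(5) by (metis nth_map)
  qed
  then show "p \<in> pgen (replicate n Shr) G g" using pgen_T_intro[of Js n Js' _ c G g] p pobjs_len n by auto
qed

lemma prel_sub:
  assumes Ss: "\<forall>S\<in>set Ss. nice_subcat S" and n: "length Ss = n"
  shows "prel Ss G g \<subseteq> prel (replicate n Shr) G g"
  unfolding prel_def using pgen_sub[OF Ss n, of G g] by (intro rtrancl_mono) auto

lemma part1:
  assumes Ss: "\<forall>S\<in>set Ss. nice_subcat S" and n: "length Ss = n"
  shows "bij_betw (pcan Ss G g) (pcolim Ss G g) (A n G g)"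
proof -
  let ?Rs = "prel Ss G g" and ?Rt = "prel (replicate n Shr) G g"
  have sub: "?Rs \<subseteq> ?Rt" using prel_sub[OF Ss n] .
  have csub: "x \<in> pcarrier (replicate n Shr) G g" if "x \<in> pcarrier Ss G g" for x
    using that n pobjs_len unfolding pcarrier_def by auto
  have rt_trans: "(a, b) \<in> ?Rt \<Longrightarrow> (b, c) \<in> ?Rt \<Longrightarrow> (a, c) \<in> ?Rt" for a b c unfolding prel_def by simp
  have can: "pcan Ss G g (?Rs `` {x}) = ?Rt `` {x}" for x
  proof
    show "pcan Ss G g (?Rs `` {x}) \<subseteq> ?Rt `` {x}"
      unfolding pcan_def n using sub rt_trans by blast
    show "?Rt `` {x} \<subseteq> pcan Ss G g (?Rs `` {x})"
      unfolding pcan_def n prel_def by auto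
  qed
  have inj: "inj_on (pcan Ss G g) (pcolim Ss G g)"
  proof
    fix X Y assume X: "X \<in> pcolim Ss G g" and Y: "Y \<in> pcolim Ss G g" and e: "pcan Ss G g X = pcan Ss G g Y"
    obtain x where x: "x \<in> pcarrier Ss G g" "X = ?Rs `` {x}" using X unfolding pcolim_def by (auto elim: quotientE)
    obtain y where y: "y \<in> pcarrier Ss G g" "Y = ?Rs `` {y}" using Y unfolding pcolim_def by (auto elim: quotientE)
    have "?Rt `` {x} = ?Rt `` {y}" using e can x y by simp
    then have "(x, y) \<in> ?Rt" unfolding prel_def by auto
    then have "simr G g x y" using claimA[OF csub[OF x(1)]] by blast
    then have "(x, y) \<in> ?Rs" using claimB[OF Ss, of "fst x" "snd x" G g "fst y" "snd y"] x y by simp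
    then show "X = Y" using x y class_eq unfolding prel_def by metis
  qed
  have img: "pcan Ss G g ` pcolim Ss G g = A n G g"
  proof
    show "pcan Ss G g ` pcolim Ss G g \<subseteq> A n G g"
    proof
      fix Z assume "Z \<in> pcan Ss G g ` pcolim Ss G g"
      then obtain x where x: "x \<in> pcarrier Ss G g" "Z = ?Rt `` {x}"
        unfolding pcolim_def using can by (auto elim!: quotientE)
      then show "Z \<in> A n G g" unfolding A_def pcolim_def using quotientI[OF csub[OF x(1)]] by simp
    qed
  next
    show "A n G g \<subseteq> pcan Ss G g ` pcolim Ss G g"
    proof
      fix Z assume "Z \<in> A n G g"
      then obtain z where z: "z \<in> pcarrier (replicate n Shr) G g" "Z = ?Rt `` {z}"
        unfolding A_def pcolim_def by (auto elim!: quotientE)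
      obtain Js c where zc: "z = (Js, c)" by (cases z)
      have zz: "length Js = n" "c \<in> hset Js G g" using z zc pcarrier_T[of Js c n G g] by auto
      have niceI: "nice_subcat (Ss ! i)" if "i < n" for i using Ss that n by simp
  have "\<forall>i<n. \<exists>p. fst p \<in> fst (Ss ! i) \<and> shrinking (fst p) (Js ! i) (snd p)"
      proof (intro allI impI)
        fix i assume i: "i < n"
        obtain J' f where "J' \<in> fst (Ss ! i)" "shrinking J' (Js ! i) f" using nice_cov[OF niceI[OF i]] by blast
        then show "\<exists>p. fst p \<in> fst (Ss ! i) \<and> shrinking (fst p) (Js ! i) (snd p)" by (intro exI[of _ "(J', f)"]) simp
      qed
      from choice_nat[OF this] obtain P where P: "\<forall>i<n. fst (P i) \<in> fst (Ss ! i) \<and> shrinking (fst (P i)) (Js ! i) (snd (P i))"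
        by blast
      define Js' where "Js' = map (\<lambda>i. fst (P i)) [0..<n]"
      define fs where "fs = map (\<lambda>i. snd (P i)) [0..<n]"
      have sf: "shrl Js' Js fs" unfolding shrl_def Js'_def fs_def using P zz by auto
      have o: "Js' \<in> pobjs Ss" unfolding pobjs_def Js'_def using P n by auto
      define y where "y = (Js', precomp G g Js' fs c)"
      have yc: "y \<in> pcarrier Ss G g" unfolding y_def pcarrier_def using o precomp_hset[OF zz(2) shrl_goodl[OF sf]] by auto
      have "(z, y) \<in> pgen (replicate n Shr) G g" unfolding y_def zc using pgen_T_intro[OF zz(1) sf zz(2)] .
      then have "(z, y) \<in> ?Rt" unfolding prel_def by auto
      then have "?Rt `` {y} = Z" using z class_eq unfolding prel_def by metis
      then have "Z = pcan Ss G g (?Rs `` {y})" using can by simp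
      moreover have "?Rs `` {y} \<in> pcolim Ss G g" unfolding pcolim_def using yc by (auto intro: quotientI)
      ultimately show "Z \<in> pcan Ss G g ` pcolim Ss G g" by blast
    qed
  qed
  show ?thesis using inj img unfolding bij_betw_def by simp
qed

lemma shr_trans: assumes a: "shrinking K' Kst w" and b: "shrinking Kst J f" shows "\<exists>h. shrinking K' J h"
  using shrinking_compose[OF b a] by blast

lemma shrl_rep: "shrinking J' J f \<Longrightarrow> shrl (replicate n J') (replicate n J) (replicate n f)"
  unfolding shrl_def by simp

lemma dgen_hat:
  assumes S: "nice_subcat S" and xy: "(x, y) \<in> dgen S n G g"
  shows "((\<lambda>(J, c). (replicate n J, c)) x, (\<lambda>(J, c). (replicate n J, c)) y) \<in> pgen (replicate n Shr) G g"
proof -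
  obtain J J' f c where e: "x = (J, c)" "y = (J', precomp G g (replicate n J') (replicate n f) c)"
    "(J', J, f) \<in> snd S" "c \<in> hset (replicate n J) G g"
  proof -
    have "\<exists>J J' f c. x = (J, c) \<and> y = (J', precomp G g (replicate n J') (replicate n f) c) \<and>
       (J', J, f) \<in> snd S \<and> c \<in> hset (replicate n J) G g"
      using xy unfolding dgen_def by auto
    then show ?thesis using that by metis
  qed
  have "shrl (replicate n J') (replicate n J) (replicate n f)" using shrl_rep[OF nice_mor[OF S e(3)]] .
  from pgen_T_intro[of "replicate n J" n "replicate n J'" "replicate n f" c G g, OF _ this e(4)]
  show ?thesis using e by simp
qed

lemma Rd_hat:
  assumes S: "nice_subcat S"
  shows "(x, y) \<in> (dgen S n G g \<union> (dgen S n G g)\<inverse>)\<^sup>* \<Longrightarrow>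
    ((\<lambda>(J, c). (replicate n J, c)) x, (\<lambda>(J, c). (replicate n J, c)) y) \<in> prel (replicate n Shr) G g"
proof (induction rule: rtrancl_induct)
  case base show ?case unfolding prel_def by (rule rtrancl.rtrancl_refl)
next
  case (step y z)
  have "((\<lambda>(J, c). (replicate n J, c)) y, (\<lambda>(J, c). (replicate n J, c)) z)
     \<in> pgen (replicate n Shr) G g \<union> (pgen (replicate n Shr) G g)\<inverse>"
  proof (cases "(y, z) \<in> dgen S n G g")
    case True
    from dgen_hat[OF S True] show ?thesis by (rule UnI1)
  next
    case False
    then have "(z, y) \<in> dgen S n G g" using step.hyps(2) by blast
    from dgen_hat[OF S this] show ?thesis by (intro UnI2 converseI)
  qed
  with step.IH show ?case unfolding prel_def by (rule rtrancl_into_rtrancl)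
qed

lemma claimBd:
  assumes S: "nice_subcat S" and x: "(J1, c1) \<in> dcarrier S n G g" and y: "(J2, c2) \<in> dcarrier S n G g"
    and sim: "simr G g (replicate n J1, c1) (replicate n J2, c2)"
  shows "((J1, c1), (J2, c2)) \<in> (dgen S n G g \<union> (dgen S n G g)\<inverse>)\<^sup>*"
proof -
  have o1: "J1 \<in> fst S" "c1 \<in> hset (replicate n J1) G g" and o2: "J2 \<in> fst S" "c2 \<in> hset (replicate n J2) G g"
    using x y unfolding dcarrier_def by auto
  obtain K u1 u2 where s: "shrl K (replicate n J1) u1" "shrl K (replicate n J2) u2"
    "precomp G g K u1 c1 = precomp G g K u2 c2"
    using sim unfolding simr_def by auto
  have lK: "length K = n" using s(1) unfolding shrl_def by simp
  obtain Kst where Kst: "\<forall>i<length (J1 # J2 # K). \<exists>f. shrinking Kst ((J1 # J2 # K) ! i) f"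
    using cospan_list by blast
  obtain K' w' where K': "K' \<in> fst S" "shrinking K' Kst w'" using nice_cov[OF S] by blast
  obtain k1 where "shrinking Kst J1 k1" using Kst[rule_format, of 0] by auto
  then have ex1: "\<exists>f. shrinking K' J1 f" using shr_trans[OF K'(2)] by blast
  obtain k2 where "shrinking Kst J2 k2" using Kst[rule_format, of "Suc 0"] by auto
  then have ex2: "\<exists>f. shrinking K' J2 f" using shr_trans[OF K'(2)] by blast
  have "\<forall>i<n. \<exists>f. shrinking K' (K ! i) f"
  proof (intro allI impI)
    fix i assume i: "i < n"
    obtain f where "shrinking Kst ((J1 # J2 # K) ! Suc (Suc i)) f" using Kst[rule_format, of "Suc (Suc i)"] i lK by auto
    then have "shrinking Kst (K ! i) f" by simp
    then show "\<exists>f. shrinking K' (K ! i) f" using shr_trans[OF K'(2)] by blast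
  qed
  from choice_nat[OF this] obtain W where W: "\<forall>i<n. shrinking K' (K ! i) (W i)" by blast
  define Wl where "Wl = map W [0..<n]"
  have sW: "shrl (replicate n K') K Wl" unfolding shrl_def Wl_def using W lK by simp
  obtain m1 where m1: "(K', J1, m1) \<in> snd S" using nice_fill[OF S o1(1) K'(1)] ex1 by blast
  obtain m2 where m2: "(K', J2, m2) \<in> snd S" using nice_fill[OF S o2(1) K'(1)] ex2 by blast
  have f1: "shrl (replicate n K') (replicate n J1) (replicate n m1)" using shrl_rep[OF nice_mor[OF S m1]] .
  have f2: "shrl (replicate n K') (replicate n J2) (replicate n m2)" using shrl_rep[OF nice_mor[OF S m2]] .
  have v1: "shrl (replicate n K') (replicate n J1) (clist (replicate n K') u1 Wl)" using shrl_clist[OF s(1) sW] .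
  have v2: "shrl (replicate n K') (replicate n J2) (clist (replicate n K') u2 Wl)" using shrl_clist[OF s(2) sW] .
  have "precomp G g (replicate n K') (replicate n m1) c1 = precomp G g (replicate n K') (clist (replicate n K') u1 Wl) c1"
    using F1[OF o1(2) shrl_goodl[OF f1] shrl_goodl[OF v1]] .
  also have "\<dots> = precomp G g (replicate n K') Wl (precomp G g K u1 c1)"
    using F2[OF o1(2) shrl_goodl[OF s(1)] shrl_goodl[OF sW]] by simp
  also have "\<dots> = precomp G g (replicate n K') Wl (precomp G g K u2 c2)" using s(3) by simp
  also have "\<dots> = precomp G g (replicate n K') (clist (replicate n K') u2 Wl) c2"
    using F2[OF o2(2) shrl_goodl[OF s(2)] shrl_goodl[OF sW]] by simp
  also have "\<dots> = precomp G g (replicate n K') (replicate n m2) c2"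
    using F1[OF o2(2) shrl_goodl[OF f2] shrl_goodl[OF v2]] by simp
  finally have eq: "precomp G g (replicate n K') (replicate n m1) c1 = precomp G g (replicate n K') (replicate n m2) c2" .
  have g1: "((J1, c1), (K', precomp G g (replicate n K') (replicate n m1) c1)) \<in> dgen S n G g"
    unfolding dgen_def mem_Collect_eq
    apply (rule exI[of _ J1], rule exI[of _ K'], rule exI[of _ m1], rule exI[of _ c1])
    using o1 K'(1) m1 by simp
  have g2: "((J2, c2), (K', precomp G g (replicate n K') (replicate n m1) c1)) \<in> dgen S n G g"
    unfolding dgen_def mem_Collect_eq eq
    apply (rule exI[of _ J2], rule exI[of _ K'], rule exI[of _ m2], rule exI[of _ c2])
    using o2 K'(1) m2 by simp
  let ?E = "dgen S n G g \<union> (dgen S n G g)\<inverse>"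
  have e1: "((J1, c1), (K', precomp G g (replicate n K') (replicate n m1) c1)) \<in> ?E" using g1 by blast
  have e2: "((K', precomp G g (replicate n K') (replicate n m1) c1), (J2, c2)) \<in> ?E" using g2 by blast
  show ?thesis using rtrancl_trans[OF r_into_rtrancl[OF e1] r_into_rtrancl[OF e2]] .
qed

lemma hat_eq: "(\<lambda>(J, c). (replicate n J, c)) = (\<lambda>x. (replicate n (fst x), snd x))"
  by (rule ext) (simp add: split_beta)

lemma part2:
  assumes S: "nice_subcat S"
  shows "bij_betw (dcan n G g) (dcolim S n G g) (A n G g)"
proof -
  let ?Rd = "(dgen S n G g \<union> (dgen S n G g)\<inverse>)\<^sup>*" and ?Rt = "prel (replicate n Shr) G g"
  let ?h = "\<lambda>x. (replicate n (fst x), snd x)"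
  have hc: "?h x \<in> pcarrier (replicate n Shr) G g" if "x \<in> dcarrier S n G g" for x
  proof -
    obtain J c where xc: "x = (J, c)" by (cases x)
    have "c \<in> hset (replicate n J) G g" using that xc unfolding dcarrier_def by blast
    then show ?thesis using xc pcarrier_T[of "replicate n J" c n G g] by simp
  qed
  have Rdh: "(?h x, ?h y) \<in> ?Rt" if "(x, y) \<in> ?Rd" for x y
    using Rd_hat[OF S that] unfolding hat_eq .
  have rt_trans: "(a, b) \<in> ?Rt \<Longrightarrow> (b, c) \<in> ?Rt \<Longrightarrow> (a, c) \<in> ?Rt" for a b c unfolding prel_def by simp
  have can: "dcan n G g (?Rd `` {x}) = ?Rt `` {?h x}" for x
  proof
    show "dcan n G g (?Rd `` {x}) \<subseteq> ?Rt `` {?h x}"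
    proof
      fix w assume "w \<in> dcan n G g (?Rd `` {x})"
      then obtain y where y: "(x, y) \<in> ?Rd" "(?h y, w) \<in> ?Rt" unfolding dcan_def hat_eq by blast
      have "(?h x, ?h y) \<in> ?Rt" using Rdh[OF y(1)] .
      then show "w \<in> ?Rt `` {?h x}" using rt_trans y(2) by blast
    qed
    show "?Rt `` {?h x} \<subseteq> dcan n G g (?Rd `` {x})"
    proof
      fix w assume w: "w \<in> ?Rt `` {?h x}"
      have "x \<in> ?Rd `` {x}" by blast
      then show "w \<in> dcan n G g (?Rd `` {x})" unfolding dcan_def hat_eq using w by blast
    qed
  qed
  have inj: "inj_on (dcan n G g) (dcolim S n G g)"
  proof
    fix X Y assume X: "X \<in> dcolim S n G g" and Y: "Y \<in> dcolim S n G g" and e: "dcan n G g X = dcan n G g Y"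
    obtain x where x: "x \<in> dcarrier S n G g" "X = ?Rd `` {x}" using X unfolding dcolim_def by (rule quotientE)
    obtain y where y: "y \<in> dcarrier S n G g" "Y = ?Rd `` {y}" using Y unfolding dcolim_def by (rule quotientE)
    have "?Rt `` {?h x} = dcan n G g X" unfolding x(2) by (rule can[symmetric])
    also have "\<dots> = dcan n G g Y" by (rule e)
    also have "\<dots> = ?Rt `` {?h y}" unfolding y(2) by (rule can)
    finally have "?Rt `` {?h x} = ?Rt `` {?h y}" .
    then have "(?h x, ?h y) \<in> ?Rt" unfolding prel_def by blast
    then have si: "simr G g (?h x) (?h y)" using claimA[OF hc[OF x(1)]] by blast
    obtain J1 c1 where xc: "x = (J1, c1)" by (cases x)
    obtain J2 c2 where yc: "y = (J2, c2)" by (cases y)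
    have si': "simr G g (replicate n J1, c1) (replicate n J2, c2)" using si unfolding xc yc fst_conv snd_conv .
    have "(x, y) \<in> ?Rd" using claimBd[OF S x(1)[unfolded xc] y(1)[unfolded yc] si'] unfolding xc yc .
    then show "X = Y" unfolding x(2) y(2) by (rule class_eq)
  qed
  have img: "dcan n G g ` dcolim S n G g = A n G g"
  proof
    show "dcan n G g ` dcolim S n G g \<subseteq> A n G g"
    proof
      fix Z assume "Z \<in> dcan n G g ` dcolim S n G g"
      then obtain X where X: "X \<in> dcolim S n G g" "Z = dcan n G g X" by (rule imageE) simp
      obtain x where x: "x \<in> dcarrier S n G g" "X = ?Rd `` {x}" using X(1) unfolding dcolim_def by (rule quotientE)
      have "Z = ?Rt `` {?h x}" using X(2) x(2) can by simp
      then show "Z \<in> A n G g" unfolding A_def pcolim_def using quotientI[OF hc[OF x(1)]] by simp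
    qed
  next
    show "A n G g \<subseteq> dcan n G g ` dcolim S n G g"
    proof
      fix Z assume "Z \<in> A n G g"
      then obtain z where z: "z \<in> pcarrier (replicate n Shr) G g" "Z = ?Rt `` {z}"
        unfolding A_def pcolim_def by (rule quotientE)
      obtain Js c where zc: "z = (Js, c)" by (cases z)
      have zz: "length Js = n" "c \<in> hset Js G g" using z zc pcarrier_T[of Js c n G g] by auto
      obtain Kst where Kst: "\<forall>i<length Js. \<exists>f. shrinking Kst (Js ! i) f" using cospan_list by blast
      obtain K' w' where K': "K' \<in> fst S" "shrinking K' Kst w'" using nice_cov[OF S] by blast
      have "\<forall>i<n. \<exists>f. shrinking K' (Js ! i) f"
      proof (intro allI impI)
        fix i assume i: "i < n"
        obtain f where "shrinking Kst (Js ! i) f" using Kst[rule_format, of i] i zz(1) by auto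
        then show "\<exists>f. shrinking K' (Js ! i) f" using shr_trans[OF K'(2)] by blast
      qed
      from choice_nat[OF this] obtain W where W: "\<forall>i<n. shrinking K' (Js ! i) (W i)" by blast
      define Wl where "Wl = map W [0..<n]"
      have sW: "shrl (replicate n K') Js Wl" unfolding shrl_def Wl_def using W zz(1) by simp
      define y where "y = (K', precomp G g (replicate n K') Wl c)"
      have yc: "y \<in> dcarrier S n G g" unfolding y_def dcarrier_def mem_Collect_eq prod.case
        using K'(1) precomp_hset[OF zz(2) shrl_goodl[OF sW]] by (rule conjI)
      have hy: "?h y = (replicate n K', precomp G g (replicate n K') Wl c)" unfolding y_def by simp
      have "(z, ?h y) \<in> pgen (replicate n Shr) G g" unfolding hy zc using pgen_T_intro[OF zz(1) sW zz(2)] .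
      then have "(z, ?h y) \<in> ?Rt" unfolding prel_def by blast
      then have "?Rt `` {z} = ?Rt `` {?h y}" unfolding prel_def by (rule class_eq)
      then have "?Rt `` {?h y} = Z" using z(2) by simp
      then have "Z = dcan n G g (?Rd `` {y})" using can by simp
      moreover have "?Rd `` {y} \<in> dcolim S n G g" unfolding dcolim_def using yc by (rule quotientI)
      ultimately show "Z \<in> dcan n G g ` dcolim S n G g" by blast
    qed
  qed
  show ?thesis using inj img unfolding bij_betw_def by simp
qed

theorem mainTheorem8:
  fixes G :: "'a digraph" and g :: 'a and n :: nat
  assumes "is_digraph G" and "g \<in> fst G"
  shows "(\<forall>Ss. length Ss = n \<and> (\<forall>S\<in>set Ss. nice_subcat S)
            \<longrightarrow> bij_betw (pcan Ss G g) (pcolim Ss G g) (A n G g))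
       \<and> (\<forall>S. nice_subcat S \<longrightarrow> bij_betw (dcan n G g) (dcolim S n G g) (A n G g))"
proof (intro conjI allI impI)
  fix Ss assume a: "length Ss = n \<and> (\<forall>S\<in>set Ss. nice_subcat S)"
  show "bij_betw (pcan Ss G g) (pcolim Ss G g) (A n G g)" using part1[of Ss n G g] a by blast
next
  fix S assume "nice_subcat S"
  then show "bij_betw (dcan n G g) (dcolim S n G g) (A n G g)" by (rule part2)
qed

end
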